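(* Let $0=t_0<t_1<\dots<t_n=1$ be a grid. Consider the following random procedure. 1. Draw $X_{t_n}\sim p_{t_n}$ and $\boldsymbol\tau_{t_n}\sim j_{t_n}(\cdot\mid X_{t_n})$. 2. For $i=n-1,\dots,0$: - draw $X_0'\sim p_{0|t_{i+1}}(\cdot\mid X_{t_{i+1}},\boldsymbol\tau_{t_{i+1}})$ (equivalently, from the masked-diffusion denoiser evaluated at $\tilde{\mathbf x}_{t_{i+1}}(\boldsymbol\tau_{t_{i+1}})$); - draw $X_{t_i}\sim q_{t_i|0,t_{i+1}}(\cdot\mid X_0',X_{t_{i+1}})$ (the UDM bridge; for $t_i=0$ this means $X_{t_0}=X_0'$); - draw $\boldsymbol\tau_{t_i}\sim j_{t_i|0}(\cdot\mid X_0',X_{t_i})$. Then the law of $(X_{t_0},\dots,X_{t_n})$ is the UDM reverse-chain law $$p_{t_n}(\mathbf x_{t_n})\prod_{i=1}^np_{t_{i-1}|t_i}(\mathbf x_{t_{i-1}}\mid\mathbf x_{t_i}).$$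
   Context: **UDM setup.** - Let $K\ge2$, $L\ge1$ and $\mathsf V=\{1,\dots,K\}$. Tokens are identified with the standard basis vectors of $\mathbb R^K$, and $\mathbf 1$ is the all-ones vector. - $\mathsf X=\mathsf V^L$. $p_0$ is a distribution on $\mathsf X$. - The schedule $\alpha:[0,1]\to[0,1]$ is continuously differentiable and strictly decreasing, with $\alpha_0=1$ and $\alpha_1=0$. Set $\alpha_{t|s}=\alpha_t/\alpha_s$. - UDM forward kernel: $q_{t|s}(\mathbf x_t\mid\mathbf x_s)=\prod_\ell\langle\mathbf x_t^\ell,\alpha_{t|s}\mathbf x_s^\ell+(1-\alpha_{t|s})\mathbf 1/K\rangle$. - $p_t(\mathbf x)=\sum_{\mathbf x_0}p_0(\mathbf x_0)q_{t|0}(\mathbf x\mid\mathbf x_0)$. - UDM reverse kernel: $p_{s|t}(\mathbf x_s\mid\mathbf x_t)=p_s(\mathbf x_s)q_{t|s}(\mathbf x_t\mid\mathbf x_s)/p_t(\mathbf x_t)$. - UDM bridge: $q_{s|0,t}(\mathbf x_s\mid\mathbf x_0,\mathbf x_t)=q_{t|s}(\mathbf x_t\mid\mathbf x_s)q_{s|0}(\mathbf x_s\mid\mathbf x_0)/q_{t|0}(\mathbf x_t\mid\mathbf x_0)$ for $s>0$, and $q_{0|0,t}(\mathbf x\mid\mathbf x_0,\mathbf x_t)=\mathbf 1\{\mathbf x=\mathbf x_0\}$. **Transition times.** - $\boldsymbol\tau\in[0,1]^L$ has density $j(\boldsymbol\tau)=\prod_\ell(-\alpha'_{\boldsymbol\tau^\ell})$,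 i.e. its coordinates are i.i.d. with $\mathbb P(\boldsymbol\tau^\ell<t)=1-\alpha_t$. - $q_{t|0}(\mathbf x_t\mid\mathbf x_0,\boldsymbol\tau)=\prod_\ell\mathrm{Cat}\big(\mathbf x_t^\ell;\mathbf 1\{\boldsymbol\tau^\ell>t\}\mathbf x_0^\ell+\mathbf 1\{\boldsymbol\tau^\ell\le t\}\mathbf 1/K\big)$. - Joint forward law: $X_0\sim p_0$ and $\boldsymbol\tau\sim j$ independent, and $X_t\mid(X_0,\boldsymbol\tau)\sim q_{t|0}(\cdot\mid X_0,\boldsymbol\tau)$. The marginal of $X_t$ is $p_t$. - $j_t(\cdot\mid\mathbf x_t)$ is the conditional density of $\boldsymbol\tau$ given $X_t=\mathbf x_t$. - $p_{0|t}(\mathbf x_0\mid\mathbf x_t,\boldsymbol\tau)\propto p_0(\mathbf x_0)q_{t|0}(\mathbf x_t\mid\mathbf x_0,\boldsymbol\tau)$ is the conditional law of $X_0$ given $(X_t,\boldsymbol\tau)$. - Masked sequence: $\tilde{\mathbf x}_t(\boldsymbol\tau)^\ell=\mathbf x_t^\ell$ if $\boldsymbol\tau^\ell>t$, and equals a mask symbol otherwise. **Resampling density.** - $j_{s|0}(\boldsymbol\tau_s\mid\mathbf x_0,\mathbf x_s):=j(\boldsymbol\tau_s)q_{s|0}(\mathbf x_s\mid\mathbf x_0,\boldsymbol\tau_s)/q_{s|0}(\mathbf x_s\mid\mathbf x_0)$. - Explicitly it is the product over $\ell$ of: - $\frac{-\alpha'_{\boldsymbol\tau_s^\ell}}{1-\alpha_s}\mathbf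 1\{\boldsymbol\tau_s^\ell\le s\}$ if $\mathbf x_s^\ell\ne\mathbf x_0^\ell$; - $\frac{-\alpha'_{\boldsymbol\tau_s^\ell}}{1+(K-1)\alpha_s}\big(\mathbf 1\{\boldsymbol\tau_s^\ell\le s\}+K\mathbf 1\{\boldsymbol\tau_s^\ell>s\}\big)$ if $\mathbf x_s^\ell=\mathbf x_0^\ell$. *)

theory Defs
  imports "HOL-Probability.Probability"
begin

text \<open>Tokens are 1..K (identified with standard basis vectors of R^K); a sequence
 in X = V^L is a function nat => nat that is restricted to positions {..<L}.
 Transition-time vectors are functions nat => real (positions {..<L}).\<close>

definition XS :: "nat \<Rightarrow> nat \<Rightarrow> (nat \<Rightarrow> nat) set" where
  "XS K L = PiE {..<L} (\<lambda>_. {1..K})"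

text \<open>cat K a u v = < e_u , a e_v + (1 - a) 1/K >\<close>
definition cat :: "nat \<Rightarrow> real \<Rightarrow> nat \<Rightarrow> nat \<Rightarrow> real" where
  "cat K a u v = a * (if u = v then 1 else 0) + (1 - a) / real K"

definition qf :: "nat \<Rightarrow> nat \<Rightarrow> (real \<Rightarrow> real) \<Rightarrow> real \<Rightarrow> real
    \<Rightarrow> (nat \<Rightarrow> nat) \<Rightarrow> (nat \<Rightarrow> nat) \<Rightarrow> real" where
  "qf K L \<alpha> t s xt xs = (\<Prod>l<L. cat K (\<alpha> t / \<alpha> s) (xt l) (xs l))"

definition pmarg :: "nat \<Rightarrow> nat \<Rightarrow> ((nat \<Rightarrow> nat) \<Rightarrow> real) \<Rightarrow> (real \<Rightarrow> real) \<Rightarrow> real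
    \<Rightarrow> (nat \<Rightarrow> nat) \<Rightarrow> real" where
  "pmarg K L p0 \<alpha> t x = (\<Sum>x0\<in>XS K L. p0 x0 * qf K L \<alpha> t 0 x x0)"

definition prev :: "nat \<Rightarrow> nat \<Rightarrow> ((nat \<Rightarrow> nat) \<Rightarrow> real) \<Rightarrow> (real \<Rightarrow> real) \<Rightarrow> real \<Rightarrow> real
    \<Rightarrow> (nat \<Rightarrow> nat) \<Rightarrow> (nat \<Rightarrow> nat) \<Rightarrow> real" where
  "prev K L p0 \<alpha> s t xs xt =
     pmarg K L p0 \<alpha> s xs * qf K L \<alpha> t s xt xs / pmarg K L p0 \<alpha> t xt"

definition bridge :: "nat \<Rightarrow> nat \<Rightarrow> (real \<Rightarrow> real) \<Rightarrow> real \<Rightarrow> real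
    \<Rightarrow> (nat \<Rightarrow> nat) \<Rightarrow> (nat \<Rightarrow> nat) \<Rightarrow> (nat \<Rightarrow> nat) \<Rightarrow> real" where
  "bridge K L \<alpha> s t x0 xt xs =
     (if s = 0 then (if xs = x0 then 1 else 0)
      else qf K L \<alpha> t s xt xs * qf K L \<alpha> s 0 xs x0 / qf K L \<alpha> t 0 xt x0)"

text \<open>density j of the transition times on [0,1]^L (w.r.t. Lebesgue measure)\<close>
definition jden :: "nat \<Rightarrow> (real \<Rightarrow> real) \<Rightarrow> (nat \<Rightarrow> real) \<Rightarrow> real" where
  "jden L \<alpha>' \<tau> = (\<Prod>l<L. (- \<alpha>' (\<tau> l)) * indicator {0..1} (\<tau> l))"

definition qtau :: "nat \<Rightarrow> nat \<Rightarrow> real \<Rightarrow> (nat \<Rightarrow> nat) \<Rightarrow> (nat \<Rightarrow> nat) \<Rightarrow> (nat \<Rightarrow> real) \<Rightarrow> real" where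
  "qtau K L t x x0 \<tau> = (\<Prod>l<L. cat K (if \<tau> l > t then 1 else 0) (x l) (x0 l))"

text \<open>j_t(tau | x): conditional density of tau given X_t = x (Bayes)\<close>
definition jcond :: "nat \<Rightarrow> nat \<Rightarrow> ((nat \<Rightarrow> nat) \<Rightarrow> real) \<Rightarrow> (real \<Rightarrow> real) \<Rightarrow> (real \<Rightarrow> real)
    \<Rightarrow> real \<Rightarrow> (nat \<Rightarrow> nat) \<Rightarrow> (nat \<Rightarrow> real) \<Rightarrow> real" where
  "jcond K L p0 \<alpha> \<alpha>' t x \<tau> =
     jden L \<alpha>' \<tau> * (\<Sum>x0\<in>XS K L. p0 x0 * qtau K L t x x0 \<tau>) / pmarg K L p0 \<alpha> t x"

definition p0cond :: "nat \<Rightarrow> nat \<Rightarrow> ((nat \<Rightarrow> nat) \<Rightarrow> real) \<Rightarrow> real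
    \<Rightarrow> (nat \<Rightarrow> nat) \<Rightarrow> (nat \<Rightarrow> real) \<Rightarrow> (nat \<Rightarrow> nat) \<Rightarrow> real" where
  "p0cond K L p0 t x \<tau> x0 =
     p0 x0 * qtau K L t x x0 \<tau> / (\<Sum>y\<in>XS K L. p0 y * qtau K L t x y \<tau>)"

definition jres :: "nat \<Rightarrow> nat \<Rightarrow> (real \<Rightarrow> real) \<Rightarrow> (real \<Rightarrow> real) \<Rightarrow> real
    \<Rightarrow> (nat \<Rightarrow> nat) \<Rightarrow> (nat \<Rightarrow> nat) \<Rightarrow> (nat \<Rightarrow> real) \<Rightarrow> real" where
  "jres K L \<alpha> \<alpha>' s x0 xs \<tau> = jden L \<alpha>' \<tau> * qtau K L s xs x0 \<tau> / qf K L \<alpha> s 0 xs x0"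

definition lebL :: "nat \<Rightarrow> (nat \<Rightarrow> real) measure" where
  "lebL L = PiM {..<L} (\<lambda>_. lborel)"

text \<open>run ... tg i x tau: starting from state (X_{t_i}, tau_{t_i}) = (x, tau), performs the
 loop iterations i-1, ..., 0 and returns the list [X_{t_0}, ..., X_{t_i}].\<close>
primrec run :: "nat \<Rightarrow> nat \<Rightarrow> ((nat \<Rightarrow> nat) \<Rightarrow> real) \<Rightarrow> (real \<Rightarrow> real) \<Rightarrow> (real \<Rightarrow> real)
    \<Rightarrow> (nat \<Rightarrow> real) \<Rightarrow> nat \<Rightarrow> (nat \<Rightarrow> nat) \<Rightarrow> (nat \<Rightarrow> real) \<Rightarrow> (nat \<Rightarrow> nat) list measure" where
  "run K L p0 \<alpha> \<alpha>' tg 0 x \<tau> = return (count_space UNIV) [x]"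
| "run K L p0 \<alpha> \<alpha>' tg (Suc i) x \<tau> =
     bind (density (count_space (XS K L)) (\<lambda>y. ennreal (p0cond K L p0 (tg (Suc i)) x \<tau> y))) (\<lambda>y.
     bind (density (count_space (XS K L)) (\<lambda>z. ennreal (bridge K L \<alpha> (tg i) (tg (Suc i)) y x z))) (\<lambda>z.
     bind (density (lebL L) (\<lambda>\<tau>'. ennreal (jres K L \<alpha> \<alpha>' (tg i) y z \<tau>'))) (\<lambda>\<tau>'.
     distr (run K L p0 \<alpha> \<alpha>' tg i z \<tau>') (count_space UNIV) (\<lambda>l. l @ [x]))))"

definition proc :: "nat \<Rightarrow> nat \<Rightarrow> ((nat \<Rightarrow> nat) \<Rightarrow> real) \<Rightarrow> (real \<Rightarrow> real) \<Rightarrow> (real \<Rightarrow> real)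
    \<Rightarrow> (nat \<Rightarrow> real) \<Rightarrow> nat \<Rightarrow> (nat \<Rightarrow> nat) list measure" where
  "proc K L p0 \<alpha> \<alpha>' tg n =
     bind (density (count_space (XS K L)) (\<lambda>x. ennreal (pmarg K L p0 \<alpha> (tg n) x))) (\<lambda>x.
     bind (density (lebL L) (\<lambda>\<tau>. ennreal (jcond K L p0 \<alpha> \<alpha>' (tg n) x \<tau>))) (\<lambda>\<tau>.
     run K L p0 \<alpha> \<alpha>' tg n x \<tau>))"

definition revlaw :: "nat \<Rightarrow> nat \<Rightarrow> ((nat \<Rightarrow> nat) \<Rightarrow> real) \<Rightarrow> (real \<Rightarrow> real)
    \<Rightarrow> (nat \<Rightarrow> real) \<Rightarrow> nat \<Rightarrow> (nat \<Rightarrow> nat) list measure" where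
  "revlaw K L p0 \<alpha> tg n = density (count_space UNIV) (\<lambda>xs.
     if length xs = Suc n \<and> set xs \<subseteq> XS K L
     then ennreal (pmarg K L p0 \<alpha> (tg n) (xs ! n) *
            (\<Prod>i\<in>{1..n}. prev K L p0 \<alpha> (tg (i - 1)) (tg i) (xs ! (i - 1)) (xs ! i)))
     else 0)"

end

theory Submission
  imports Defs
begin


locale udm =
  fixes K L n :: nat and p0 :: "(nat \<Rightarrow> nat) \<Rightarrow> real"
    and \<alpha> \<alpha>' :: "real \<Rightarrow> real" and tg :: "nat \<Rightarrow> real"
  assumes K2: "K \<ge> 2" and L1: "L \<ge> 1"
    and p0nn: "\<forall>x\<in>XS K L. p0 x \<ge> 0" and p0sum: "(\<Sum>x\<in>XS K L. p0 x) = 1"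
    and deriv: "\<forall>s\<in>{0..1}. (\<alpha> has_real_derivative \<alpha>' s) (at s within {0..1})"
    and cont: "continuous_on {0..1} \<alpha>'"
    and decr: "\<forall>s\<in>{0..1}. \<forall>t\<in>{0..1}. s < t \<longrightarrow> \<alpha> t < \<alpha> s"
    and a0: "\<alpha> 0 = 1" and a1: "\<alpha> 1 = 0"
    and n1: "n \<ge> 1" and tg0: "tg 0 = 0" and tgn: "tg n = 1" and tginc: "\<forall>i<n. tg i < tg (Suc i)"
begin

lemma finXS: "finite (XS K L)" unfolding XS_def by (auto intro: finite_PiE)

lemma XS_out: "x \<in> XS K L \<Longrightarrow> \<not> l < L \<Longrightarrow> x l = undefined"
  unfolding XS_def by (auto simp: PiE_def extensional_def)

lemma Kpos: "real K > 0" using K2 by simp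

lemma alpha_pos: "s \<in> {0..1} \<Longrightarrow> s < 1 \<Longrightarrow> \<alpha> s > 0"
  using decr[rule_format, of s 1] a1 by auto
lemma alpha_lt1: "s \<in> {0..1} \<Longrightarrow> 0 < s \<Longrightarrow> \<alpha> s < 1"
  using decr[rule_format, of 0 s] a0 by auto
lemma alpha_le1: "s \<in> {0..1} \<Longrightarrow> \<alpha> s \<le> 1"
  using alpha_lt1[of s] a0 by (cases "s = 0") auto
lemma alpha_ge0: "s \<in> {0..1} \<Longrightarrow> \<alpha> s \<ge> 0"
  using alpha_pos[of s] a1 by (cases "s = 1") auto

lemma alpha'_nonpos:
  assumes s: "s \<in> {0..1}" shows "\<alpha>' s \<le> 0"
proof -
  have D: "((\<lambda>y. (\<alpha> y - \<alpha> s) / (y - s)) \<longlongrightarrow> \<alpha>' s) (at s within {0..1})"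
    using deriv s by (simp add: has_field_derivative_iff)
  have ev: "eventually (\<lambda>y. (\<alpha> y - \<alpha> s) / (y - s) \<le> 0) (at s within {0..1})"
    unfolding eventually_at_filter
  proof (intro always_eventually allI impI)
    fix y assume y: "y \<noteq> s" "y \<in> {0..1}"
    show "(\<alpha> y - \<alpha> s) / (y - s) \<le> 0"
    proof (cases "y < s")
      case True then have "\<alpha> s < \<alpha> y" using decr s y by auto
      then show ?thesis using True by (simp add: divide_nonneg_neg)
    next
      case False then have "s < y" using y by auto
      then have "\<alpha> y < \<alpha> s" using decr s y by auto
      then show ?thesis using \<open>s < y\<close> by (simp add: divide_nonpos_pos)
    qed
  qed
  have nb: "at s within {0..1} \<noteq> (bot :: real filter)"
  proof -
    consider "s = 0" | "s = 1" | "0 < s \<and> s < 1" using s by force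
    then show ?thesis
    proof cases
      case 1 then show ?thesis by (simp add: at_within_Icc_at_right)
    next
      case 2 then show ?thesis by (simp add: at_within_Icc_at_left)
    next
      case 3 then show ?thesis by (simp add: at_within_Icc_at)
    qed
  qed
  show ?thesis using tendsto_upperbound[OF D ev nb] .
qed

lemma tg_less: "i < j \<Longrightarrow> j \<le> n \<Longrightarrow> tg i < tg j"
proof (induction j)
  case 0 then show ?case by simp
next
  case (Suc j)
  have "tg j < tg (Suc j)" using tginc Suc.prems by auto
  then show ?case using Suc by (cases "i = j") auto
qed

lemma tg_le: "i \<le> j \<Longrightarrow> j \<le> n \<Longrightarrow> tg i \<le> tg j"
  using tg_less by (cases "i = j") (auto simp: less_eq_real_def)

lemma tg_range: "i \<le> n \<Longrightarrow> tg i \<in> {0..1}"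
  using tg_le[of 0 i] tg_le[of i n] tg0 tgn by auto

lemma tg_pos: "0 < i \<Longrightarrow> i \<le> n \<Longrightarrow> tg i > 0"
  using tg_less[of 0 i] tg0 by auto

lemma tg_lt1: "i < n \<Longrightarrow> tg i < 1"
  using tg_less[of i n] tgn by auto

lemma cat_nonneg: "0 \<le> a \<Longrightarrow> a \<le> 1 \<Longrightarrow> 0 \<le> cat K a u v"
  unfolding cat_def using Kpos by auto

lemma cat_pos: "0 \<le> a \<Longrightarrow> a < 1 \<Longrightarrow> 0 < cat K a u v"
  unfolding cat_def using Kpos by (auto intro: add_nonneg_pos)

lemma cat_one: "cat K 1 u v = (if u = v then 1 else 0)"
  unfolding cat_def by simp

lemma qtau_nonneg: "0 \<le> qtau K L t x y \<tau>"
  unfolding qtau_def by (auto intro!: prod_nonneg cat_nonneg)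

lemma qf_nonneg: "s \<in> {0..1} \<Longrightarrow> t \<in> {0..1} \<Longrightarrow> s \<le> t \<Longrightarrow> s < 1 \<Longrightarrow> 0 \<le> qf K L \<alpha> t s x y"
proof -
  assume s: "s \<in> {0..1}" and t: "t \<in> {0..1}" and st: "s \<le> t" and s1: "s < 1"
  have "\<alpha> t \<le> \<alpha> s" using decr s t st by (cases "s = t") (auto simp: less_eq_real_def)
  then have "0 \<le> \<alpha> t / \<alpha> s" "\<alpha> t / \<alpha> s \<le> 1"
    using alpha_ge0[OF t] alpha_pos[OF s s1] by auto
  then show ?thesis unfolding qf_def by (auto intro!: prod_nonneg cat_nonneg)
qed

lemma qf_pos: "s \<in> {0..1} \<Longrightarrow> t \<in> {0..1} \<Longrightarrow> s < t \<Longrightarrow> 0 < qf K L \<alpha> t s x y"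
proof -
  assume s: "s \<in> {0..1}" and t: "t \<in> {0..1}" and st: "s < t"
  have s1: "s < 1" using st t by auto
  have "\<alpha> t < \<alpha> s" using decr s t st by auto
  then have "0 \<le> \<alpha> t / \<alpha> s" "\<alpha> t / \<alpha> s < 1"
    using alpha_ge0[OF t] alpha_pos[OF s s1] by auto
  then show ?thesis unfolding qf_def by (auto intro!: prod_pos cat_pos)
qed


lemma qf00: "x \<in> XS K L \<Longrightarrow> y \<in> XS K L \<Longrightarrow> qf K L \<alpha> 0 0 x y = (if x = y then 1 else 0)"
proof -
  assume x: "x \<in> XS K L" and y: "y \<in> XS K L"
  have "qf K L \<alpha> 0 0 x y = (\<Prod>l<L. if x l = y l then 1 else 0)"
    unfolding qf_def using a0 by (simp add: cat_one)
  also have "\<dots> = (if x = y then 1 else 0)"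
  proof (cases "x = y")
    case False
    then obtain l where "x l \<noteq> y l" by auto
    moreover have "l < L" using XS_out[OF x, of l] XS_out[OF y, of l] \<open>x l \<noteq> y l\<close> by (metis)
    ultimately show ?thesis using False by (auto intro!: prod_zero)
  qed simp
  finally show ?thesis .
qed


definition \<beta> :: "real \<Rightarrow> real" where "\<beta> r = indicator {0..1} r * (- \<alpha>' r)"

lemma beta_meas[measurable]: "\<beta> \<in> borel_measurable borel"
proof -
  have "(\<lambda>x. indicator {0..1::real} x *\<^sub>R (- \<alpha>' x)) \<in> borel_measurable borel"
    by (rule borel_measurable_continuous_on_indicator) (auto intro: continuous_intros cont)
  then show ?thesis unfolding \<beta>_def by simp
qed

lemma beta_nonneg: "0 \<le> \<beta> r"
  unfolding \<beta>_def using alpha'_nonpos[of r] by (auto simp: indicator_def)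

lemma ftc:
  assumes ab: "0 \<le> a" "a \<le> b" "b \<le> 1"
  shows "(\<integral>\<^sup>+r. ennreal (\<beta> r) * indicator {a..b} r \<partial>lborel) = ennreal (\<alpha> a - \<alpha> b)"
proof -
  have "((\<lambda>r. - \<alpha>' r) has_integral (- \<alpha> b - (- \<alpha> a))) {a..b}"
  proof (rule fundamental_theorem_of_calculus)
    show "a \<le> b" by fact
    fix x assume x: "x \<in> {a..b}"
    then have "(\<alpha> has_real_derivative \<alpha>' x) (at x within {0..1})" using deriv ab by auto
    then have "(\<alpha> has_real_derivative \<alpha>' x) (at x within {a..b})"
      by (rule has_field_derivative_subset) (use ab in auto)
    then have "((\<lambda>r. - \<alpha> r) has_real_derivative - \<alpha>' x) (at x within {a..b})"
      by (rule DERIV_minus)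
    then show "((\<lambda>r. - \<alpha> r) has_vector_derivative - \<alpha>' x) (at x within {a..b})"
      by (simp add: has_real_derivative_iff_has_vector_derivative)
  qed
  then have I: "((\<lambda>r. - \<alpha>' r) has_integral (\<alpha> a - \<alpha> b)) {a..b}" by simp
  have "(\<integral>\<^sup>+r. ennreal (- \<alpha>' r) * indicator {a..b} r \<partial>lborel) = ennreal (\<alpha> a - \<alpha> b)"
    by (rule nn_integral_has_integral_lebesgue'[OF _ I]) (use alpha'_nonpos ab in auto)
  moreover have "\<And>r. ennreal (\<beta> r) * indicator {a..b} r = ennreal (- \<alpha>' r) * indicator {a..b} r"
    using ab by (auto simp: \<beta>_def indicator_def)
  ultimately show ?thesis by simp
qed

lemma one_coord:
  assumes s: "s \<in> {0..1}"
  shows "(\<integral>\<^sup>+r. ennreal (\<beta> r * cat K (if s < r then 1 else 0) u v) \<partial>lborel) = ennreal (cat K (\<alpha> s) u v)"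
proof -
  define c1 where "c1 = cat K 1 u v"
  define c0 where "c0 = cat K 0 u v"
  have c0: "0 \<le> c0" and c1: "0 \<le> c1" unfolding c0_def c1_def by (auto intro: cat_nonneg)
  have eq: "ennreal (\<beta> r * cat K (if s < r then 1 else 0) u v) =
      ennreal c1 * (ennreal (\<beta> r) * indicator {s<..1} r) + ennreal c0 * (ennreal (\<beta> r) * indicator {0..s} r)" for r
  proof -
    consider "r < 0" | "1 < r" | "0 \<le> r \<and> r \<le> s" | "s < r \<and> r \<le> 1" by force
    then show ?thesis
    proof cases
      case 3 then show ?thesis using s c0 beta_nonneg[of r]
        by (auto simp: indicator_def c0_def ennreal_mult'' mult.commute)
    next
      case 4 then show ?thesis using s c1 beta_nonneg[of r]
        by (auto simp: indicator_def c1_def ennreal_mult'' mult.commute)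
    qed (use s in \<open>auto simp: \<beta>_def indicator_def\<close>)
  qed
  have A1: "(\<integral>\<^sup>+r. ennreal (\<beta> r) * indicator {s<..1} r \<partial>lborel) = ennreal (\<alpha> s)"
  proof -
    have "(\<integral>\<^sup>+r. ennreal (\<beta> r) * indicator {s<..1} r \<partial>lborel) = (\<integral>\<^sup>+r. ennreal (\<beta> r) * indicator {s..1} r \<partial>lborel)"
      by (rule nn_integral_cong_AE) (use AE_lborel_singleton[of s] in \<open>auto elim!: eventually_mono simp: indicator_def\<close>)
    also have "\<dots> = ennreal (\<alpha> s - \<alpha> 1)" using s by (intro ftc) auto
    finally show ?thesis using a1 by simp
  qed
  have A0: "(\<integral>\<^sup>+r. ennreal (\<beta> r) * indicator {0..s} r \<partial>lborel) = ennreal (1 - \<alpha> s)"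
    using ftc[of 0 s] s a0 by auto
  have "(\<integral>\<^sup>+r. ennreal (\<beta> r * cat K (if s < r then 1 else 0) u v) \<partial>lborel) =
     ennreal c1 * ennreal (\<alpha> s) + ennreal c0 * ennreal (1 - \<alpha> s)"
    unfolding eq by (subst nn_integral_add) (auto simp: nn_integral_cmult A1 A0)
  also have "\<dots> = ennreal (c1 * \<alpha> s + c0 * (1 - \<alpha> s))"
    using c0 c1 alpha_ge0[OF s] alpha_le1[OF s] by (simp add: ennreal_mult'' ennreal_plus)
  also have "c1 * \<alpha> s + c0 * (1 - \<alpha> s) = cat K (\<alpha> s) u v"
    unfolding c1_def c0_def cat_def by (simp add: algebra_simps)
  finally show ?thesis .
qed

lemma jden_qtau: "jden L \<alpha>' \<tau> * qtau K L s x y \<tau> =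
   (\<Prod>l<L. \<beta> (\<tau> l) * cat K (if s < \<tau> l then 1 else 0) (x l) (y l))"
  unfolding jden_def qtau_def \<beta>_def prod.distrib[symmetric] by (intro prod.cong) auto

lemma PI:
  assumes s: "s \<in> {0..1}"
  shows "(\<integral>\<^sup>+\<tau>. ennreal (jden L \<alpha>' \<tau> * qtau K L s x y \<tau>) \<partial>lebL L) = ennreal (qf K L \<alpha> s 0 x y)"
proof -
  interpret P: product_sigma_finite "\<lambda>_::nat. lborel :: real measure" by standard
  have nn: "\<And>a r u v. 0 \<le> a \<Longrightarrow> a \<le> 1 \<Longrightarrow> 0 \<le> \<beta> r * cat K a u v"
    using beta_nonneg by (auto intro!: mult_nonneg_nonneg cat_nonneg)
  have "(\<integral>\<^sup>+\<tau>. ennreal (jden L \<alpha>' \<tau> * qtau K L s x y \<tau>) \<partial>lebL L) =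
     (\<integral>\<^sup>+\<tau>. (\<Prod>l<L. ennreal (\<beta> (\<tau> l) * cat K (if s < \<tau> l then 1 else 0) (x l) (y l))) \<partial>lebL L)"
    unfolding jden_qtau by (subst prod_ennreal) (auto intro: nn)
  also have "\<dots> = (\<Prod>l<L. \<integral>\<^sup>+r. ennreal (\<beta> r * cat K (if s < r then 1 else 0) (x l) (y l)) \<partial>lborel)"
    unfolding lebL_def by (rule P.product_nn_integral_prod) auto
  also have "\<dots> = (\<Prod>l<L. ennreal (cat K (\<alpha> s) (x l) (y l)))"
    using one_coord[OF s] by simp
  also have "\<dots> = ennreal (qf K L \<alpha> s 0 x y)"
    unfolding qf_def a0 using alpha_ge0[OF s] alpha_le1[OF s]
    by (subst prod_ennreal) (auto intro: cat_nonneg)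
  finally show ?thesis .
qed

end


lemma emeasure_dens:
  assumes S: "finite S" and supp: "\<And>a. a \<notin> S \<Longrightarrow> f a = 0"
  shows "emeasure (density (count_space UNIV) f) A = (\<Sum>a\<in>A\<inter>S. f a)"
proof -
  have "emeasure (density (count_space UNIV) f) A = (\<integral>\<^sup>+ x. f x * indicator A x \<partial>count_space UNIV)"
    by (rule emeasure_density) auto
  also have "\<dots> = (\<Sum>x\<in>A\<inter>S. f x * indicator A x)"
    by (rule nn_integral_count_space') (use S supp in auto)
  also have "\<dots> = (\<Sum>a\<in>A\<inter>S. f a)" by (intro sum.cong) auto
  finally show ?thesis .
qed

lemma subprob_dens:
  assumes S: "finite S" and supp: "\<And>a. a \<notin> S \<Longrightarrow> f a = 0" and le: "(\<Sum>a\<in>S. f a) \<le> 1"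
  shows "subprob_space (density (count_space UNIV) f)"
proof (rule subprob_spaceI)
  show "emeasure (density (count_space UNIV) f) (space (density (count_space UNIV) f)) \<le> 1"
    using emeasure_dens[OF S supp, where A=UNIV] le by simp
qed simp

lemma kernel_dens:
  fixes M :: "'a measure" and g :: "'a \<Rightarrow> 'b \<Rightarrow> ennreal"
  assumes S: "finite S"
  and N: "\<And>x. x \<in> space M \<Longrightarrow> N x = density (count_space UNIV) (g x)"
  and supp: "\<And>x a. x \<in> space M \<Longrightarrow> a \<notin> S \<Longrightarrow> g x a = 0"
  and meas: "\<And>a. (\<lambda>x. g x a) \<in> borel_measurable M"
  and sub: "\<And>x. x \<in> space M \<Longrightarrow> subprob_space (N x)"
  shows "N \<in> measurable M (subprob_algebra (count_space UNIV))"
proof (rule measurable_subprob_algebra)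
  show "subprob_space (N x)" if "x \<in> space M" for x using sub that .
  show "sets (N x) = sets (count_space UNIV)" if "x \<in> space M" for x using N that by simp
  fix A :: "'b set"
  have "(\<lambda>x. \<Sum>a\<in>A\<inter>S. g x a) \<in> borel_measurable M" using meas by measurable
  then show "(\<lambda>x. emeasure (N x) A) \<in> borel_measurable M"
    by (rule measurable_cong[THEN iffD1, rotated])
       (simp add: N emeasure_dens[OF S] supp)
qed

lemma bind_dens:
  fixes M :: "'a measure" and g :: "'a \<Rightarrow> 'b \<Rightarrow> ennreal"
  assumes ne: "space M \<noteq> {}" and S: "finite S"
  and N: "\<And>x. x \<in> space M \<Longrightarrow> N x = density (count_space UNIV) (g x)"
  and supp: "\<And>x a. x \<in> space M \<Longrightarrow> a \<notin> S \<Longrightarrow> g x a = 0"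
  and meas: "\<And>a. (\<lambda>x. g x a) \<in> borel_measurable M"
  and sub: "\<And>x. x \<in> space M \<Longrightarrow> subprob_space (N x)"
  shows "bind M N = density (count_space UNIV) (\<lambda>a. \<integral>\<^sup>+x. g x a \<partial>M)"
proof (rule measure_eqI)
  have K: "N \<in> measurable M (subprob_algebra (count_space UNIV))"
    by (rule kernel_dens[OF S N supp meas sub])
  show "sets (bind M N) = sets (density (count_space UNIV) (\<lambda>a. \<integral>\<^sup>+x. g x a \<partial>M))"
    using ne N by (subst sets_bind) auto
  fix A assume "A \<in> sets (bind M N)"
  have "emeasure (bind M N) A = \<integral>\<^sup>+x. emeasure (N x) A \<partial>M"
    by (rule emeasure_bind[OF ne K]) simp
  also have "\<dots> = \<integral>\<^sup>+x. (\<Sum>a\<in>A\<inter>S. g x a) \<partial>M"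
    by (intro nn_integral_cong) (simp add: N emeasure_dens[OF S] supp)
  also have "\<dots> = (\<Sum>a\<in>A\<inter>S. \<integral>\<^sup>+x. g x a \<partial>M)"
    by (rule nn_integral_sum) (use meas in auto)
  also have "\<dots> = emeasure (density (count_space UNIV) (\<lambda>a. \<integral>\<^sup>+x. g x a \<partial>M)) A"
  proof (rule emeasure_dens[OF S, symmetric])
    fix a assume "a \<notin> S"
    then have "\<integral>\<^sup>+x. g x a \<partial>M = \<integral>\<^sup>+x. 0 \<partial>M" by (intro nn_integral_cong) (simp add: supp)
    then show "\<integral>\<^sup>+x. g x a \<partial>M = 0" by simp
  qed
  finally show "emeasure (bind M N) A = emeasure (density (count_space UNIV) (\<lambda>a. \<integral>\<^sup>+x. g x a \<partial>M)) A" .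
qed

lemma distr_app:
  assumes S: "finite S" and supp: "\<And>a. a \<notin> S \<Longrightarrow> f a = 0"
  shows "distr (density (count_space UNIV) f) (count_space UNIV) (\<lambda>l. l @ [x]) =
    density (count_space UNIV) (\<lambda>a. if a \<noteq> [] \<and> last a = x then f (butlast a) else 0)"
proof (rule measure_eqI)
  fix A :: "'a list set"
  let ?h = "\<lambda>l. l @ [x]"
  have fin: "finite (?h ` S)" using S by simp
  have supp2: "(if a \<noteq> [] \<and> last a = x then f (butlast a) else 0) = 0" if "a \<notin> ?h ` S" for a
  proof (cases "a \<noteq> [] \<and> last a = x")
    case True
    then have "a = ?h (butlast a)" by (metis append_butlast_last_id)
    then have "butlast a \<notin> S" using that by force
    then show ?thesis using supp by simp
  qed auto
  have "emeasure (distr (density (count_space UNIV) f) (count_space UNIV) ?h) A =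
      emeasure (density (count_space UNIV) f) (?h -` A)"
    by (subst emeasure_distr) auto
  also have "\<dots> = (\<Sum>a\<in>?h -` A \<inter> S. f a)" by (rule emeasure_dens[OF S supp])
  also have "\<dots> = (\<Sum>b\<in>?h ` (?h -` A \<inter> S). f (butlast b))"
    by (subst sum.reindex) (auto simp: inj_on_def)
  also have "?h ` (?h -` A \<inter> S) = A \<inter> ?h ` S" by auto
  also have "(\<Sum>b\<in>A \<inter> ?h ` S. f (butlast b)) = (\<Sum>b\<in>A \<inter> ?h ` S. if b \<noteq> [] \<and> last b = x then f (butlast b) else 0)"
    by (intro sum.cong) auto
  also have "\<dots> = emeasure (density (count_space UNIV) (\<lambda>a. if a \<noteq> [] \<and> last a = x then f (butlast a) else 0)) A"
    by (rule emeasure_dens[OF fin supp2, symmetric])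
  finally show "emeasure (distr (density (count_space UNIV) f) (count_space UNIV) ?h) A = \<dots>" .
qed simp



primrec Rf :: "nat \<Rightarrow> nat \<Rightarrow> ((nat \<Rightarrow> nat) \<Rightarrow> real) \<Rightarrow> (real \<Rightarrow> real) \<Rightarrow> (real \<Rightarrow> real)
    \<Rightarrow> (nat \<Rightarrow> real) \<Rightarrow> nat \<Rightarrow> (nat \<Rightarrow> nat) \<Rightarrow> (nat \<Rightarrow> real) \<Rightarrow> (nat \<Rightarrow> nat) list \<Rightarrow> ennreal" where
  "Rf K L p0 \<alpha> \<alpha>' tg 0 x \<tau> a = (if a = [x] then 1 else 0)"
| "Rf K L p0 \<alpha> \<alpha>' tg (Suc i) x \<tau> a =
    (\<Sum>y\<in>XS K L. ennreal (p0cond K L p0 (tg (Suc i)) x \<tau> y) *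
      (\<Sum>z\<in>XS K L. ennreal (bridge K L \<alpha> (tg i) (tg (Suc i)) y x z) *
        (\<integral>\<^sup>+\<tau>'. ennreal (jres K L \<alpha> \<alpha>' (tg i) y z \<tau>') *
           (if a \<noteq> [] \<and> last a = x then Rf K L p0 \<alpha> \<alpha>' tg i z \<tau>' (butlast a) else 0) \<partial>lebL L)))"

definition SS :: "nat \<Rightarrow> nat \<Rightarrow> nat \<Rightarrow> (nat \<Rightarrow> nat) list set" where
  "SS K L i = {a. length a = Suc i \<and> set a \<subseteq> XS K L}"

context udm begin

abbreviation "R \<equiv> Rf K L p0 \<alpha> \<alpha>' tg"

lemma finSS: "finite (SS K L i)"
  unfolding SS_def using finite_lists_length_eq[OF finXS, of "Suc i"] by (simp add: conj_commute)

lemma SS_snoc: "x \<in> XS K L \<Longrightarrow> a \<noteq> [] \<Longrightarrow> last a = x \<Longrightarrow> a \<notin> SS K L (Suc i) \<Longrightarrow> butlast a \<notin> SS K L i"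
proof -
  assume x: "x \<in> XS K L" and a: "a \<noteq> []" "last a = x" "a \<notin> SS K L (Suc i)"
  have "a = butlast a @ [x]" using a by (metis append_butlast_last_id)
  show ?thesis
  proof
    assume "butlast a \<in> SS K L i"
    then have "butlast a @ [x] \<in> SS K L (Suc i)" using x unfolding SS_def by auto
    then show False using a \<open>a = butlast a @ [x]\<close> by simp
  qed
qed

lemma R_supp: "x \<in> XS K L \<Longrightarrow> a \<notin> SS K L i \<Longrightarrow> R i x \<tau> a = 0"
proof (induction i arbitrary: x \<tau> a)
  case 0 then show ?case by (auto simp: SS_def)
next
  case (Suc i)
  have "(if a \<noteq> [] \<and> last a = x then R i z \<tau>' (butlast a) else 0) = 0" if "z \<in> XS K L" for z \<tau>'
    using Suc.IH[OF that] SS_snoc[OF Suc.prems(1) _ _ Suc.prems(2)] by auto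
  then show ?case by simp
qed

lemma space_lebL: "space (lebL L) = PiE {..<L} (\<lambda>_. UNIV)"
  unfolding lebL_def by (simp add: space_PiM)

lemma space_lebL_ne: "space (lebL L) \<noteq> {}"
  unfolding space_lebL by (simp add: PiE_eq_empty_iff)

lemma qtau_meas[measurable]: "(\<lambda>\<tau>. qtau K L t x y \<tau>) \<in> borel_measurable (lebL L)"
  unfolding qtau_def lebL_def by measurable

lemma jden_beta: "jden L \<alpha>' \<tau> = (\<Prod>l<L. \<beta> (\<tau> l))"
  unfolding jden_def \<beta>_def by (simp add: mult.commute)

lemma jden_meas[measurable]: "(\<lambda>\<tau>. jden L \<alpha>' \<tau>) \<in> borel_measurable (lebL L)"
  unfolding jden_beta lebL_def by measurable

lemma jden_nonneg: "0 \<le> jden L \<alpha>' \<tau>"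
  unfolding jden_beta by (auto intro: prod_nonneg beta_nonneg)

lemma p0cond_meas[measurable]: "(\<lambda>\<tau>. p0cond K L p0 t x \<tau> y) \<in> borel_measurable (lebL L)"
  unfolding p0cond_def by measurable

lemma jres_meas[measurable]: "(\<lambda>\<tau>. jres K L \<alpha> \<alpha>' s y z \<tau>) \<in> borel_measurable (lebL L)"
  unfolding jres_def by measurable

lemma R_meas[measurable]: "(\<lambda>\<tau>. R i x \<tau> a) \<in> borel_measurable (lebL L)"
  by (cases i) simp_all

lemma p0cond_nonneg: "x0 \<in> XS K L \<Longrightarrow> 0 \<le> p0cond K L p0 t x \<tau> x0"
  unfolding p0cond_def using p0nn
  by (auto intro!: divide_nonneg_nonneg mult_nonneg_nonneg sum_nonneg qtau_nonneg)

lemma p0cond_sum: "(\<Sum>y\<in>XS K L. p0cond K L p0 t x \<tau> y) \<le> 1"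
  unfolding p0cond_def sum_divide_distrib[symmetric] by (simp add: divide_le_eq_1)

lemma XS_mem: "x \<in> XS K L \<Longrightarrow> l < L \<Longrightarrow> x l \<in> {1..K}"
proof -
  assume x: "x \<in> XS K L" and l: "l < L"
  have "x \<in> PiE {..<L} (\<lambda>_. {1..K})" using x unfolding XS_def .
  moreover have "l \<in> {..<L}" using l by simp
  ultimately show ?thesis by (rule PiE_mem)
qed

lemma sum_ind: "u \<in> {1..K} \<Longrightarrow> (\<Sum>v\<in>{1..K}. (if u = v then f v else 0)) = (f u :: real)"
  by (simp add: sum.delta)

lemma cat_CK:
  assumes u: "u \<in> {1..K}" and w: "w \<in> {1..K}"
  shows "(\<Sum>v\<in>{1..K}. cat K a u v * cat K b v w) = cat K (a * b) u w"
proof -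
  define c where "c = (1 - a) / real K"
  define d where "d = (1 - b) / real K"
  have "\<And>v. cat K a u v * cat K b v w =
      (if u = v then a * b * (if v = w then 1 else 0) else 0) + (if u = v then a * d else 0)
      + c * b * (if v = w then 1 else 0) + c * d"
    unfolding cat_def c_def[symmetric] d_def[symmetric] by (auto simp: algebra_simps)
  then have "(\<Sum>v\<in>{1..K}. cat K a u v * cat K b v w) =
     (\<Sum>v\<in>{1..K}. (if u = v then a * b * (if v = w then 1 else 0) else 0)) +
     (\<Sum>v\<in>{1..K}. (if u = v then a * d else 0)) +
     (\<Sum>v\<in>{1..K}. c * b * (if v = w then 1 else 0)) + (\<Sum>v\<in>{1..K}. c * d)"
    by (simp add: sum.distrib)
  also have "\<dots> = a * b * (if u = w then 1 else 0) + a * d + c * b + real K * c * d"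
  proof -
    have 1: "(\<Sum>v\<in>{1..K}. (if u = v then a * b * (if v = w then 1 else 0) else 0)) = a * b * (if u = w then 1 else 0)"
      using u by (subst sum.delta') auto
    have 2: "(\<Sum>v\<in>{1..K}. (if u = v then a * d else 0)) = a * d"
      using u by (subst sum.delta') auto
    have 3: "(\<Sum>v\<in>{1..K}. c * b * (if v = w then 1 else 0)) = c * b"
      using w by (subst sum_distrib_left[symmetric]) (simp add: sum.delta)
    have 4: "(\<Sum>v\<in>{1..K}. c * d) = real K * c * d" by simp
    show ?thesis unfolding 1 2 3 4 ..
  qed
  also have "\<dots> = cat K (a * b) u w"
    unfolding cat_def c_def d_def using Kpos by (simp add: field_simps)
  finally show ?thesis .
qed

lemma qf_CK:
  assumes x: "x \<in> XS K L" and y: "y \<in> XS K L" and s: "s \<in> {0..1}" "s < 1"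
  shows "(\<Sum>z\<in>XS K L. qf K L \<alpha> t s x z * qf K L \<alpha> s 0 z y) = qf K L \<alpha> t 0 x y"
proof -
  have as: "\<alpha> s \<noteq> 0" using alpha_pos[OF s] by simp
  define f where "f = (\<lambda>l v. cat K (\<alpha> t / \<alpha> s) (x l) v * cat K (\<alpha> s / \<alpha> 0) v (y l))"
  have "\<And>z. qf K L \<alpha> t s x z * qf K L \<alpha> s 0 z y = (\<Prod>l<L. f l (z l))"
    unfolding qf_def f_def by (rule prod.distrib[symmetric])
  then have "(\<Sum>z\<in>XS K L. qf K L \<alpha> t s x z * qf K L \<alpha> s 0 z y) = (\<Sum>z\<in>XS K L. \<Prod>l<L. f l (z l))"
    by presburger
  also have "\<dots> = (\<Prod>l<L. \<Sum>v\<in>{1..K}. f l v)"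
    unfolding XS_def by (rule prod_sum_PiE[symmetric]) auto
  also have "\<dots> = (\<Prod>l<L. cat K (\<alpha> t / \<alpha> 0) (x l) (y l))"
  proof (rule prod.cong[OF refl])
    fix l assume "l \<in> {..<L}"
    then have xl: "x l \<in> {1..K}" and yl: "y l \<in> {1..K}" using XS_mem x y by auto
    have e: "\<alpha> t / \<alpha> s * (\<alpha> s / \<alpha> 0) = \<alpha> t / \<alpha> 0" using as a0 by simp
    show "(\<Sum>v\<in>{1..K}. f l v) = cat K (\<alpha> t / \<alpha> 0) (x l) (y l)"
      unfolding f_def cat_CK[OF xl yl] e ..
  qed
  finally show ?thesis unfolding qf_def .
qed

lemma bridge_nonneg:
  assumes "i < n" shows "0 \<le> bridge K L \<alpha> (tg i) (tg (Suc i)) y x z"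
proof -
  have r: "tg i \<in> {0..1}" "tg (Suc i) \<in> {0..1}" "tg i < tg (Suc i)" "tg i < 1"
    using tg_range[of i] tg_range[of "Suc i"] tginc assms tg_lt1 by auto
  then show ?thesis unfolding bridge_def
    by (auto intro!: divide_nonneg_nonneg mult_nonneg_nonneg qf_nonneg)
qed

lemma bridge_sum:
  assumes i: "i < n" and x: "x \<in> XS K L" and y: "y \<in> XS K L"
  shows "(\<Sum>z\<in>XS K L. bridge K L \<alpha> (tg i) (tg (Suc i)) y x z) = 1"
proof (cases "tg i = 0")
  case True then show ?thesis unfolding bridge_def using y finXS by (simp add: sum.delta')
next
  case False
  have r: "tg i \<in> {0..1}" "tg (Suc i) \<in> {0..1}" "tg i < tg (Suc i)" "tg i < 1"
    using tg_range[of i] tg_range[of "Suc i"] tginc i tg_lt1 by auto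
  have pos: "0 < qf K L \<alpha> (tg (Suc i)) 0 x y"
    using r False by (intro qf_pos) auto
  show ?thesis unfolding bridge_def using False
    using pos by (simp add: sum_divide_distrib[symmetric] qf_CK[OF x y r(1) r(4)] less_imp_neq[symmetric])
qed

lemma jres_nonneg: "s \<in> {0..1} \<Longrightarrow> s < 1 \<Longrightarrow> 0 \<le> jres K L \<alpha> \<alpha>' s y z \<tau>"
  unfolding jres_def using a0
  by (auto intro!: divide_nonneg_nonneg mult_nonneg_nonneg jden_nonneg qtau_nonneg qf_nonneg)

lemma jres_int:
  assumes s: "s \<in> {0..1}" "s < 1"
  shows "(\<integral>\<^sup>+\<tau>. ennreal (jres K L \<alpha> \<alpha>' s y z \<tau>) \<partial>lebL L) \<le> 1"
proof -
  define c where "c = qf K L \<alpha> s 0 z y"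
  have c: "0 \<le> c" unfolding c_def using s by (intro qf_nonneg) auto
  have "(\<integral>\<^sup>+\<tau>. ennreal (jres K L \<alpha> \<alpha>' s y z \<tau>) \<partial>lebL L) =
        (\<integral>\<^sup>+\<tau>. ennreal (jden L \<alpha>' \<tau> * qtau K L s z y \<tau>) * ennreal (1 / c) \<partial>lebL L)"
    unfolding jres_def c_def[symmetric] using c
    by (intro nn_integral_cong) (subst ennreal_mult''[symmetric], simp_all)
  also have "\<dots> = ennreal c * ennreal (1 / c)"
    by (subst nn_integral_multc) (simp_all add: PI[OF s(1)] c_def)
  also have "\<dots> \<le> 1"
    using c by (cases "c = 0") (simp_all add: ennreal_mult''[symmetric])
  finally show ?thesis .
qed

end


lemma bind_dens_subprob:
  fixes M :: "'a measure" and g :: "'a \<Rightarrow> 'b \<Rightarrow> ennreal"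
  assumes S: "finite S"
  and N: "\<And>x. x \<in> space M \<Longrightarrow> N x = density (count_space UNIV) (g x)"
  and supp: "\<And>x a. x \<in> space M \<Longrightarrow> a \<notin> S \<Longrightarrow> g x a = 0"
  and meas: "\<And>a. (\<lambda>x. g x a) \<in> borel_measurable M"
  and sub: "\<And>x. x \<in> space M \<Longrightarrow> subprob_space (N x)"
  and subM: "subprob_space M"
  shows "subprob_space (bind M N)"
  by (rule subprob_space_bind[OF subM kernel_dens[OF S N supp meas sub]])

lemma return_dens: "return (count_space UNIV) x = density (count_space UNIV) (\<lambda>a. if a = x then 1 else 0)"
proof (rule measure_eqI)
  fix A :: "'a set"
  have "emeasure (density (count_space UNIV) (\<lambda>a. if a = x then 1 else 0)) A = (\<Sum>a\<in>A \<inter> {x}. (if a = x then 1 else 0))"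
    by (rule emeasure_dens) auto
  also have "\<dots> = indicator A x" by (cases "x \<in> A") auto
  finally show "emeasure (return (count_space UNIV) x) A = emeasure (density (count_space UNIV) (\<lambda>a. if a = x then 1 else 0)) A"
    by simp
qed simp

lemma nn_int_dcount:
  assumes "finite A"
  shows "(\<integral>\<^sup>+y. g y \<partial>density (count_space A) (\<lambda>y. ennreal (f y))) = (\<Sum>y\<in>A. ennreal (f y) * g y)"
  by (subst nn_integral_density) (simp_all add: nn_integral_count_space_finite[OF assms])

lemma subprob_dcount:
  assumes A: "finite A" "A \<noteq> {}" and f: "\<And>y. y \<in> A \<Longrightarrow> 0 \<le> f y" and le: "(\<Sum>y\<in>A. f y) \<le> 1"
  shows "subprob_space (density (count_space A) (\<lambda>y. ennreal (f y)))"
proof (rule subprob_spaceI)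
  have "emeasure (density (count_space A) (\<lambda>y. ennreal (f y))) A = (\<integral>\<^sup>+y. ennreal (f y) * indicator A y \<partial>count_space A)"
    by (rule emeasure_density) auto
  also have "\<dots> = (\<Sum>y\<in>A. ennreal (f y))"
    by (subst nn_integral_count_space_finite[OF A(1)]) (intro sum.cong, auto)
  also have "\<dots> = ennreal (\<Sum>y\<in>A. f y)" using f by (rule sum_ennreal)
  also have "\<dots> \<le> 1" using le by simp
  finally show "emeasure (density (count_space A) (\<lambda>y. ennreal (f y))) (space (density (count_space A) (\<lambda>y. ennreal (f y)))) \<le> 1"
    by simp
qed (use A in simp)

context udm begin

lemma subprob_D3:
  assumes s: "s \<in> {0..1}" "s < 1"
  shows "subprob_space (density (lebL L) (\<lambda>\<tau>'. ennreal (jres K L \<alpha> \<alpha>' s y z \<tau>')))"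
proof (rule subprob_spaceI)
  let ?D = "density (lebL L) (\<lambda>\<tau>'. ennreal (jres K L \<alpha> \<alpha>' s y z \<tau>'))"
  have "emeasure ?D (space ?D) = (\<integral>\<^sup>+\<tau>. ennreal (jres K L \<alpha> \<alpha>' s y z \<tau>) * indicator (space (lebL L)) \<tau> \<partial>lebL L)"
    by (subst emeasure_density) auto
  also have "\<dots> = (\<integral>\<^sup>+\<tau>. ennreal (jres K L \<alpha> \<alpha>' s y z \<tau>) \<partial>lebL L)"
    by (intro nn_integral_cong) auto
  also have "\<dots> \<le> 1" by (rule jres_int[OF s])
  finally show "emeasure ?D (space ?D) \<le> 1" .
qed (simp add: space_lebL_ne)

lemma run_dens:
  "x \<in> XS K L \<Longrightarrow> i \<le> n \<Longrightarrow>
   run K L p0 \<alpha> \<alpha>' tg i x \<tau> = density (count_space UNIV) (R i x \<tau>) \<and> subprob_space (run K L p0 \<alpha> \<alpha>' tg i x \<tau>)"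
proof (induction i arbitrary: x \<tau>)
  case 0
  have "R 0 x \<tau> = (\<lambda>a. if a = [x] then 1 else 0)" by (simp add: fun_eq_iff)
  then have "run K L p0 \<alpha> \<alpha>' tg 0 x \<tau> = density (count_space UNIV) (R 0 x \<tau>)"
    by (simp add: return_dens)
  moreover have "subprob_space (run K L p0 \<alpha> \<alpha>' tg 0 x \<tau>)"
    by (simp add: prob_space_return prob_space_imp_subprob_space)
  ultimately show ?case ..
next
  case (Suc i)
  note x = Suc.prems(1)
  have i: "i < n" using Suc.prems by simp
  define s where "s = tg i"
  define t where "t = tg (Suc i)"
  have s: "s \<in> {0..1}" "s < 1" unfolding s_def using tg_range[of i] tg_lt1[OF i] i by auto
  define G where "G = (\<lambda>z \<tau>' a. if a \<noteq> [] \<and> last a = x then R i z \<tau>' (butlast a) else 0)"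
  define D1 where "D1 = density (count_space (XS K L)) (\<lambda>y. ennreal (p0cond K L p0 t x \<tau> y))"
  define D2 where "D2 = (\<lambda>y. density (count_space (XS K L)) (\<lambda>z. ennreal (bridge K L \<alpha> s t y x z)))"
  define D3 where "D3 = (\<lambda>y z. density (lebL L) (\<lambda>\<tau>'. ennreal (jres K L \<alpha> \<alpha>' s y z \<tau>')))"
  have IH: "\<And>z \<tau>'. z \<in> XS K L \<Longrightarrow> run K L p0 \<alpha> \<alpha>' tg i z \<tau>' = density (count_space UNIV) (R i z \<tau>') \<and>
      subprob_space (run K L p0 \<alpha> \<alpha>' tg i z \<tau>')"
    using Suc.IH i by (meson less_imp_le)
  have Gsupp: "G z \<tau>' a = 0" if "z \<in> XS K L" "a \<notin> SS K L (Suc i)" for z \<tau>' a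
    unfolding G_def using R_supp[OF that(1)] SS_snoc[OF x _ _ that(2)] by auto
  have Gmeas: "(\<lambda>\<tau>'. G z \<tau>' a) \<in> borel_measurable (D3 y z)" for y z a
    unfolding D3_def G_def measurable_density_eq1 by measurable
  have step1: "distr (run K L p0 \<alpha> \<alpha>' tg i z \<tau>') (count_space UNIV) (\<lambda>l. l @ [x]) = density (count_space UNIV) (G z \<tau>')"
    if z: "z \<in> XS K L" for z \<tau>'
    unfolding G_def using IH[OF z] by (simp add: distr_app[OF finSS R_supp[OF z]])
  have sub1: "subprob_space (distr (run K L p0 \<alpha> \<alpha>' tg i z \<tau>') (count_space UNIV) (\<lambda>l. l @ [x]))"
    if z: "z \<in> XS K L" for z \<tau>'
  proof -
    have "subprob_space (run K L p0 \<alpha> \<alpha>' tg i z \<tau>')" using IH[OF z] by blast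
    moreover have "(\<lambda>l. l @ [x]) \<in> run K L p0 \<alpha> \<alpha>' tg i z \<tau>' \<rightarrow>\<^sub>M count_space UNIV"
      using IH[OF z] by (simp add: measurable_density_eq1)
    ultimately show ?thesis by (rule subprob_space.subprob_space_distr) auto
  qed
  have ne3: "space (D3 y z) \<noteq> {}" for y z unfolding D3_def using space_lebL_ne by simp
  have sub3: "subprob_space (D3 y z)" for y z unfolding D3_def using subprob_D3[OF s] .
  have step2: "bind (D3 y z) (\<lambda>\<tau>'. distr (run K L p0 \<alpha> \<alpha>' tg i z \<tau>') (count_space UNIV) (\<lambda>l. l @ [x]))
      = density (count_space UNIV) (\<lambda>a. \<integral>\<^sup>+\<tau>'. G z \<tau>' a \<partial>D3 y z)"
    and sub2': "subprob_space (bind (D3 y z) (\<lambda>\<tau>'. distr (run K L p0 \<alpha> \<alpha>' tg i z \<tau>') (count_space UNIV) (\<lambda>l. l @ [x])))"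
    if z: "z \<in> XS K L" for y z
    using bind_dens[OF ne3 finSS step1[OF z] Gsupp[OF z] Gmeas sub1[OF z]]
       bind_dens_subprob[OF finSS step1[OF z] Gsupp[OF z] Gmeas sub1[OF z] sub3] by auto
  have XSne: "XS K L \<noteq> {}" unfolding XS_def using K2 by (simp add: PiE_eq_empty_iff)
  define F2 where "F2 = (\<lambda>y z a. \<integral>\<^sup>+\<tau>'. G z \<tau>' a \<partial>D3 y z)"
  have F2supp: "F2 y z a = 0" if "z \<in> XS K L" "a \<notin> SS K L (Suc i)" for y z a
  proof -
    have "F2 y z a = (\<integral>\<^sup>+\<tau>'. 0 \<partial>D3 y z)" unfolding F2_def
      by (intro nn_integral_cong) (simp add: Gsupp[OF that])
    then show ?thesis by simp
  qed
  have ne2: "space (D2 y) \<noteq> {}" for y unfolding D2_def using XSne by simp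
  have sub2: "subprob_space (D2 y)" if y: "y \<in> XS K L" for y
    unfolding D2_def s_def t_def
    by (rule subprob_dcount[OF finXS XSne bridge_nonneg[OF i]]) (simp add: bridge_sum[OF i x y])
  have step3: "bind (D2 y) (\<lambda>z. bind (D3 y z) (\<lambda>\<tau>'. distr (run K L p0 \<alpha> \<alpha>' tg i z \<tau>') (count_space UNIV) (\<lambda>l. l @ [x])))
      = density (count_space UNIV) (\<lambda>a. \<integral>\<^sup>+z. F2 y z a \<partial>D2 y)"
    and sub3': "subprob_space (bind (D2 y) (\<lambda>z. bind (D3 y z) (\<lambda>\<tau>'. distr (run K L p0 \<alpha> \<alpha>' tg i z \<tau>') (count_space UNIV) (\<lambda>l. l @ [x]))))"
    if y: "y \<in> XS K L" for y
  proof -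
    have N: "\<And>z. z \<in> space (D2 y) \<Longrightarrow> bind (D3 y z) (\<lambda>\<tau>'. distr (run K L p0 \<alpha> \<alpha>' tg i z \<tau>') (count_space UNIV) (\<lambda>l. l @ [x]))
       = density (count_space UNIV) (F2 y z)"
      unfolding D2_def F2_def by (simp add: step2)
    have sp: "\<And>z. z \<in> space (D2 y) \<Longrightarrow> subprob_space (bind (D3 y z) (\<lambda>\<tau>'. distr (run K L p0 \<alpha> \<alpha>' tg i z \<tau>') (count_space UNIV) (\<lambda>l. l @ [x])))"
      unfolding D2_def using sub2' by simp
    have su: "\<And>z a. z \<in> space (D2 y) \<Longrightarrow> a \<notin> SS K L (Suc i) \<Longrightarrow> F2 y z a = 0"
      unfolding D2_def using F2supp by simp
    have me: "\<And>a. (\<lambda>z. F2 y z a) \<in> borel_measurable (D2 y)"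
      unfolding D2_def measurable_density_eq1 by simp
    show "bind (D2 y) (\<lambda>z. bind (D3 y z) (\<lambda>\<tau>'. distr (run K L p0 \<alpha> \<alpha>' tg i z \<tau>') (count_space UNIV) (\<lambda>l. l @ [x])))
      = density (count_space UNIV) (\<lambda>a. \<integral>\<^sup>+z. F2 y z a \<partial>D2 y)"
      by (rule bind_dens[OF ne2 finSS N su me sp])
    show "subprob_space (bind (D2 y) (\<lambda>z. bind (D3 y z) (\<lambda>\<tau>'. distr (run K L p0 \<alpha> \<alpha>' tg i z \<tau>') (count_space UNIV) (\<lambda>l. l @ [x]))))"
      by (rule bind_dens_subprob[OF finSS N su me sp sub2[OF y]])
  qed
  define F1 where "F1 = (\<lambda>y a. \<integral>\<^sup>+z. F2 y z a \<partial>D2 y)"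
  have F1supp: "F1 y a = 0" if "y \<in> XS K L" "a \<notin> SS K L (Suc i)" for y a
  proof -
    have "F1 y a = (\<integral>\<^sup>+z. 0 \<partial>D2 y)" unfolding F1_def
      by (intro nn_integral_cong) (simp add: D2_def F2supp[OF _ that(2)])
    then show ?thesis by simp
  qed
  have ne1: "space D1 \<noteq> {}" unfolding D1_def using XSne by simp
  have sub1': "subprob_space D1"
    unfolding D1_def by (rule subprob_dcount[OF finXS XSne p0cond_nonneg p0cond_sum])
  have run_eq: "run K L p0 \<alpha> \<alpha>' tg (Suc i) x \<tau> = bind D1 (\<lambda>y. bind (D2 y) (\<lambda>z. bind (D3 y z) (\<lambda>\<tau>'. distr (run K L p0 \<alpha> \<alpha>' tg i z \<tau>') (count_space UNIV) (\<lambda>l. l @ [x]))))"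
    unfolding D1_def D2_def D3_def s_def t_def by simp
  have N1: "\<And>y. y \<in> space D1 \<Longrightarrow> bind (D2 y) (\<lambda>z. bind (D3 y z) (\<lambda>\<tau>'. distr (run K L p0 \<alpha> \<alpha>' tg i z \<tau>') (count_space UNIV) (\<lambda>l. l @ [x])))
       = density (count_space UNIV) (F1 y)"
    unfolding D1_def F1_def by (simp add: step3)
  have sp1: "\<And>y. y \<in> space D1 \<Longrightarrow> subprob_space (bind (D2 y) (\<lambda>z. bind (D3 y z) (\<lambda>\<tau>'. distr (run K L p0 \<alpha> \<alpha>' tg i z \<tau>') (count_space UNIV) (\<lambda>l. l @ [x]))))"
    unfolding D1_def using sub3' by simp
  have su1: "\<And>y a. y \<in> space D1 \<Longrightarrow> a \<notin> SS K L (Suc i) \<Longrightarrow> F1 y a = 0"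
    unfolding D1_def using F1supp by simp
  have me1: "\<And>a. (\<lambda>y. F1 y a) \<in> borel_measurable D1"
    unfolding D1_def measurable_density_eq1 by simp
  have E: "run K L p0 \<alpha> \<alpha>' tg (Suc i) x \<tau> = density (count_space UNIV) (\<lambda>a. \<integral>\<^sup>+y. F1 y a \<partial>D1)"
    unfolding run_eq by (rule bind_dens[OF ne1 finSS N1 su1 me1 sp1])
  have SP: "subprob_space (run K L p0 \<alpha> \<alpha>' tg (Suc i) x \<tau>)"
    unfolding run_eq by (rule bind_dens_subprob[OF finSS N1 su1 me1 sp1 sub1'])
  have "(\<lambda>a. \<integral>\<^sup>+y. F1 y a \<partial>D1) = R (Suc i) x \<tau>"
  proof
    fix a
    have I3: "(\<integral>\<^sup>+\<tau>'. G z \<tau>' a \<partial>D3 y z) = (\<integral>\<^sup>+\<tau>'. ennreal (jres K L \<alpha> \<alpha>' s y z \<tau>') * G z \<tau>' a \<partial>lebL L)" for y z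
      unfolding D3_def G_def by (subst nn_integral_density) auto
    show "(\<integral>\<^sup>+y. F1 y a \<partial>D1) = R (Suc i) x \<tau> a"
      unfolding F1_def F2_def D1_def D2_def nn_int_dcount[OF finXS] I3
      by (simp add: G_def s_def t_def)
  qed
  then show ?case using E SP by (simp del: Rf.simps)
qed

end


context udm begin

definition V :: "real \<Rightarrow> (nat \<Rightarrow> nat) \<Rightarrow> (nat \<Rightarrow> real) \<Rightarrow> real" where
  "V t x \<tau> = jden L \<alpha>' \<tau> * (\<Sum>x0\<in>XS K L. p0 x0 * qtau K L t x x0 \<tau>)"

definition chain :: "nat \<Rightarrow> (nat \<Rightarrow> nat) list \<Rightarrow> real" where
  "chain i a = (\<Prod>j\<in>{1..i}. prev K L p0 \<alpha> (tg (j - 1)) (tg j) (a ! (j - 1)) (a ! j))"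

lemma V_meas[measurable]: "(\<lambda>\<tau>. V t x \<tau>) \<in> borel_measurable (lebL L)"
  unfolding V_def by measurable

lemma emul: "0 \<le> a \<Longrightarrow> 0 \<le> b \<Longrightarrow> ennreal a * ennreal b = ennreal (a * b)"
  by (simp add: ennreal_mult)

lemma Vsplit: "ennreal (V t x \<tau>) = (\<Sum>x0\<in>XS K L. ennreal (p0 x0 * (jden L \<alpha>' \<tau> * qtau K L t x x0 \<tau>)))"
proof -
  have "V t x \<tau> = (\<Sum>x0\<in>XS K L. p0 x0 * (jden L \<alpha>' \<tau> * qtau K L t x x0 \<tau>))"
    unfolding V_def sum_distrib_left by (simp add: algebra_simps)
  also have "ennreal \<dots> = (\<Sum>x0\<in>XS K L. ennreal (p0 x0 * (jden L \<alpha>' \<tau> * qtau K L t x x0 \<tau>)))"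
    using p0nn by (intro sum_ennreal[symmetric]) (auto intro!: mult_nonneg_nonneg jden_nonneg qtau_nonneg)
  finally show ?thesis .
qed

lemma V_int:
  assumes t: "t \<in> {0..1}"
  shows "(\<integral>\<^sup>+\<tau>. ennreal (V t x \<tau>) \<partial>lebL L) = ennreal (pmarg K L p0 \<alpha> t x)"
proof -
  have "(\<integral>\<^sup>+\<tau>. ennreal (V t x \<tau>) \<partial>lebL L) = (\<Sum>x0\<in>XS K L. \<integral>\<^sup>+\<tau>. ennreal (p0 x0) * ennreal (jden L \<alpha>' \<tau> * qtau K L t x x0 \<tau>) \<partial>lebL L)"
    unfolding Vsplit using p0nn
    by (subst nn_integral_sum) (auto intro!: nn_integral_cong sum.cong simp: ennreal_mult jden_nonneg qtau_nonneg)
  also have "\<dots> = (\<Sum>x0\<in>XS K L. ennreal (p0 x0) * ennreal (qf K L \<alpha> t 0 x x0))"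
    by (subst nn_integral_cmult) (auto simp: PI[OF t])
  also have "\<dots> = ennreal (pmarg K L p0 \<alpha> t x)"
    unfolding pmarg_def using p0nn t
    by (subst sum_ennreal[symmetric]) (auto intro!: sum.cong emul mult_nonneg_nonneg qf_nonneg)
  finally show ?thesis .
qed

lemma pmarg_nonneg: "t \<in> {0..1} \<Longrightarrow> 0 \<le> pmarg K L p0 \<alpha> t x"
  unfolding pmarg_def using p0nn by (auto intro!: sum_nonneg mult_nonneg_nonneg qf_nonneg)

lemma pmarg_pos: "t \<in> {0..1} \<Longrightarrow> 0 < t \<Longrightarrow> 0 < pmarg K L p0 \<alpha> t x"
proof -
  assume t: "t \<in> {0..1}" "0 < t"
  obtain y where y: "y \<in> XS K L" "p0 y > 0"
  proof (rule ccontr)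
    assume "\<not> thesis"
    then have "\<forall>y\<in>XS K L. p0 y = 0" using p0nn that by force
    then show False using p0sum by simp
  qed
  have "0 < p0 y * qf K L \<alpha> t 0 x y" using y t by (intro mult_pos_pos qf_pos) auto
  also have "\<dots> \<le> pmarg K L p0 \<alpha> t x" unfolding pmarg_def
    by (rule member_le_sum[OF y(1) _ finXS]) (use p0nn t in \<open>auto intro!: mult_nonneg_nonneg qf_nonneg\<close>)
  finally show ?thesis .
qed

lemma pmarg0: "y \<in> XS K L \<Longrightarrow> pmarg K L p0 \<alpha> 0 y = p0 y"
  unfolding pmarg_def by (simp add: qf00 if_distrib sum.delta finXS cong: if_cong)

lemma VP: "y \<in> XS K L \<Longrightarrow> V t x \<tau> * p0cond K L p0 t x \<tau> y = p0 y * (jden L \<alpha>' \<tau> * qtau K L t x y \<tau>)"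
proof -
  assume y: "y \<in> XS K L"
  define D where "D = (\<Sum>x0\<in>XS K L. p0 x0 * qtau K L t x x0 \<tau>)"
  show ?thesis
  proof (cases "D = 0")
    case True
    have "p0 y * qtau K L t x y \<tau> = 0"
      using True unfolding D_def using p0nn
      by (subst (asm) sum_nonneg_eq_0_iff) (auto intro!: mult_nonneg_nonneg qtau_nonneg simp: finXS y)
    then show ?thesis unfolding V_def p0cond_def D_def[symmetric] using True by auto
  next
    case False
    then show ?thesis unfolding V_def p0cond_def D_def[symmetric] by (simp add: field_simps)
  qed
qed

lemma chain_snoc:
  assumes len: "length a' = Suc i"
  shows "chain (Suc i) (a' @ [x]) = chain i a' * prev K L p0 \<alpha> (tg i) (tg (Suc i)) (last a') x"
proof -
  have ne: "a' \<noteq> []" using len by auto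
  have n1: "(a' @ [x]) ! i = last a'" using len ne by (simp add: nth_append last_conv_nth)
  have n2: "(a' @ [x]) ! Suc i = x" using len by (simp add: nth_append)
  have P: "(\<Prod>j\<in>{1..i}. prev K L p0 \<alpha> (tg (j - 1)) (tg j) ((a' @ [x]) ! (j - 1)) ((a' @ [x]) ! j)) = chain i a'"
    unfolding chain_def using len by (intro prod.cong refl) (auto simp: nth_append)
  have "chain (Suc i) (a' @ [x]) = (\<Prod>j\<in>{1..i}. prev K L p0 \<alpha> (tg (j - 1)) (tg j) ((a' @ [x]) ! (j - 1)) ((a' @ [x]) ! j))
      * prev K L p0 \<alpha> (tg i) (tg (Suc i)) ((a' @ [x]) ! i) ((a' @ [x]) ! Suc i)"
    unfolding chain_def by (simp add: prod.cl_ivl_Suc)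
  then show ?thesis unfolding P n1 n2 .
qed

lemma chain0: "chain 0 a = 1" unfolding chain_def by simp

lemma prev_eq: "t \<in> {0..1} \<Longrightarrow> 0 < t \<Longrightarrow>
  pmarg K L p0 \<alpha> t x * prev K L p0 \<alpha> s t z x = pmarg K L p0 \<alpha> s z * qf K L \<alpha> t s x z"
  unfolding prev_def using pmarg_pos[of t x] by (simp add: field_simps)

lemma SS_snoc_iff: "x \<in> XS K L \<Longrightarrow> (a' @ [x] \<in> SS K L (Suc i)) = (a' \<in> SS K L i)"
  unfolding SS_def by auto

lemma keyid: "x \<in> XS K L \<Longrightarrow> i \<le> n \<Longrightarrow>
  (\<integral>\<^sup>+\<tau>. ennreal (V (tg i) x \<tau>) * R i x \<tau> a \<partial>lebL L) =
  ennreal (if a \<in> SS K L i \<and> last a = x then pmarg K L p0 \<alpha> (tg i) x * chain i a else 0)"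
proof (induction i arbitrary: x a)
  case 0
  have cond: "(a \<in> SS K L 0 \<and> last a = x) = (a = [x])"
    using 0 unfolding SS_def by (cases a) auto
  show ?case
  proof (cases "a = [x]")
    case True
    then show ?thesis unfolding cond using V_int[of 0 x] tg0 by (simp add: chain0)
  next
    case False
    then show ?thesis unfolding cond by simp
  qed
next
  case (Suc i)
  note x = Suc.prems(1)
  have i: "i < n" using Suc.prems by simp
  define s where "s = tg i"
  define t where "t = tg (Suc i)"
  have s: "s \<in> {0..1}" "s < 1" unfolding s_def using tg_range[of i] tg_lt1[OF i] i by auto
  have t: "t \<in> {0..1}" "0 < t" "s < t" unfolding t_def s_def using tg_range[of "Suc i"] tg_pos[of "Suc i"] tginc i Suc.prems by auto
  define I where "I = (\<lambda>y z. \<integral>\<^sup>+\<tau>'. ennreal (jres K L \<alpha> \<alpha>' s y z \<tau>') *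
           (if a \<noteq> [] \<and> last a = x then R i z \<tau>' (butlast a) else 0) \<partial>lebL L)"
  define C where "C = (\<lambda>y. \<Sum>z\<in>XS K L. ennreal (bridge K L \<alpha> s t y x z) * I y z)"
  have Rdef: "R (Suc i) x \<tau> a = (\<Sum>y\<in>XS K L. ennreal (p0cond K L p0 t x \<tau> y) * C y)" for \<tau>
    by (simp add: I_def C_def s_def t_def)
  have L1: "(\<integral>\<^sup>+\<tau>. ennreal (V t x \<tau>) * R (Suc i) x \<tau> a \<partial>lebL L) =
     (\<Sum>y\<in>XS K L. ennreal (p0 y * qf K L \<alpha> t 0 x y) * C y)"
  proof -
    have Vnn: "0 \<le> V t x \<tau>" for \<tau> unfolding V_def using p0nn
      by (auto intro!: mult_nonneg_nonneg sum_nonneg jden_nonneg qtau_nonneg)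
    have "(\<integral>\<^sup>+\<tau>. ennreal (V t x \<tau>) * R (Suc i) x \<tau> a \<partial>lebL L) =
        (\<integral>\<^sup>+\<tau>. (\<Sum>y\<in>XS K L. ennreal (p0 y * (jden L \<alpha>' \<tau> * qtau K L t x y \<tau>)) * C y) \<partial>lebL L)"
    proof (intro nn_integral_cong)
      fix \<tau>
      have "ennreal (V t x \<tau>) * R (Suc i) x \<tau> a = (\<Sum>y\<in>XS K L. (ennreal (V t x \<tau>) * ennreal (p0cond K L p0 t x \<tau> y)) * C y)"
        unfolding Rdef sum_distrib_left by (simp add: mult.assoc)
      also have "\<dots> = (\<Sum>y\<in>XS K L. ennreal (p0 y * (jden L \<alpha>' \<tau> * qtau K L t x y \<tau>)) * C y)"
        by (intro sum.cong refl) (simp add: emul Vnn p0cond_nonneg VP)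
      finally show "ennreal (V t x \<tau>) * R (Suc i) x \<tau> a = \<dots>" .
    qed
    also have "\<dots> = (\<Sum>y\<in>XS K L. (\<integral>\<^sup>+\<tau>. ennreal (p0 y * (jden L \<alpha>' \<tau> * qtau K L t x y \<tau>)) \<partial>lebL L) * C y)"
      by (subst nn_integral_sum) (auto intro!: sum.cong nn_integral_multc)
    also have "\<dots> = (\<Sum>y\<in>XS K L. ennreal (p0 y * qf K L \<alpha> t 0 x y) * C y)"
    proof (intro sum.cong refl)
      fix y assume y: "y \<in> XS K L"
      have "(\<integral>\<^sup>+\<tau>. ennreal (p0 y * (jden L \<alpha>' \<tau> * qtau K L t x y \<tau>)) \<partial>lebL L)
          = (\<integral>\<^sup>+\<tau>. ennreal (p0 y) * ennreal (jden L \<alpha>' \<tau> * qtau K L t x y \<tau>) \<partial>lebL L)"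
        using p0nn y by (intro nn_integral_cong) (simp add: emul jden_nonneg qtau_nonneg)
      also have "\<dots> = ennreal (p0 y) * ennreal (qf K L \<alpha> t 0 x y)"
        by (subst nn_integral_cmult) (auto simp: PI[OF t(1)])
      also have "\<dots> = ennreal (p0 y * qf K L \<alpha> t 0 x y)"
        using p0nn y t by (intro emul) (auto intro!: qf_nonneg)
      finally show "(\<integral>\<^sup>+\<tau>. ennreal (p0 y * (jden L \<alpha>' \<tau> * qtau K L t x y \<tau>)) \<partial>lebL L) * C y = ennreal (p0 y * qf K L \<alpha> t 0 x y) * C y"
        by simp
    qed
    finally show ?thesis .
  qed
  have goalL: "(\<integral>\<^sup>+\<tau>. ennreal (V (tg (Suc i)) x \<tau>) * R (Suc i) x \<tau> a \<partial>lebL L) =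
     (\<Sum>y\<in>XS K L. ennreal (p0 y * qf K L \<alpha> t 0 x y) * C y)"
    using L1 unfolding t_def .
  show ?case unfolding t_def[symmetric] unfolding L1
  proof (cases "a \<noteq> [] \<and> last a = x")
    case False
    have "I y z = 0" for y z unfolding I_def if_not_P[OF False] by simp
    then have "C y = 0" for y by (simp add: C_def)
    moreover have "\<not> (a \<in> SS K L (Suc i) \<and> last a = x)" using False unfolding SS_def by auto
    ultimately show "(\<Sum>y\<in>XS K L. ennreal (p0 y * qf K L \<alpha> t 0 x y) * C y) =
      ennreal (if a \<in> SS K L (Suc i) \<and> last a = x then pmarg K L p0 \<alpha> t x * chain (Suc i) a else 0)" by auto
  next
    case True
    define a' where "a' = butlast a"
    have a: "a = a' @ [x]" using True unfolding a'_def by (metis append_butlast_last_id)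
    have I': "I y z = (\<integral>\<^sup>+\<tau>'. ennreal (jres K L \<alpha> \<alpha>' s y z \<tau>') * R i z \<tau>' a' \<partial>lebL L)" for y z
      unfolding I_def using True a'_def by simp
    have RHS: "(a \<in> SS K L (Suc i) \<and> last a = x) = (a' \<in> SS K L i)" using SS_snoc_iff[OF x] a by simp
    show "(\<Sum>y\<in>XS K L. ennreal (p0 y * qf K L \<alpha> t 0 x y) * C y) =
      ennreal (if a \<in> SS K L (Suc i) \<and> last a = x then pmarg K L p0 \<alpha> t x * chain (Suc i) a else 0)"
      unfolding RHS
    proof (cases i)
      case 0
      have s0: "s = 0" unfolding s_def 0 using tg0 .
      have Cy: "C y = I y y" if y: "y \<in> XS K L" for y
      proof -
        have e: "(\<lambda>z. ennreal (bridge K L \<alpha> s t y x z) * I y z) = (\<lambda>z. if z = y then I y z else 0)"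
          by (auto simp: bridge_def s0)
        show ?thesis unfolding C_def e using y finXS by (simp add: sum.delta')
      qed
      have Iyy: "I y y = (if a' = [y] then 1 else 0)" if y: "y \<in> XS K L" for y
      proof -
        have q: "qf K L \<alpha> 0 0 y y = 1" using qf00[OF y y] by simp
        have "(\<integral>\<^sup>+\<tau>'. ennreal (jres K L \<alpha> \<alpha>' s y y \<tau>') \<partial>lebL L) = 1"
          unfolding jres_def s0 q using PI[of 0 y y] q by simp
        then show ?thesis unfolding I' 0 by (cases "a' = [y]") simp_all
      qed
      have sum1: "(\<Sum>y\<in>XS K L. ennreal (p0 y * qf K L \<alpha> t 0 x y) * C y) =
          (\<Sum>y\<in>XS K L. if a' = [y] then ennreal (p0 y * qf K L \<alpha> t 0 x y) else 0)"
        by (intro sum.cong refl) (simp add: Cy Iyy)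
      show "(\<Sum>y\<in>XS K L. ennreal (p0 y * qf K L \<alpha> t 0 x y) * C y) =
        ennreal (if a' \<in> SS K L i then pmarg K L p0 \<alpha> t x * chain (Suc i) a else 0)"
      proof (cases "a' \<in> SS K L i")
        case True
        then obtain y0 where a': "a' = [y0]" and y0: "y0 \<in> XS K L"
          unfolding SS_def 0 by (cases a') auto
        have "(\<Sum>y\<in>XS K L. if a' = [y] then ennreal (p0 y * qf K L \<alpha> t 0 x y) else 0) = ennreal (p0 y0 * qf K L \<alpha> t 0 x y0)"
          unfolding a' using y0 finXS by (simp add: sum.delta)
        moreover have "pmarg K L p0 \<alpha> t x * chain (Suc i) a = p0 y0 * qf K L \<alpha> t 0 x y0"
        proof -
          have "chain (Suc i) a = prev K L p0 \<alpha> 0 t y0 x"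
            unfolding a a' 0 using chain_snoc[of "[y0]" 0 x] tg0 by (simp add: chain0 t_def 0)
          then show ?thesis using prev_eq[OF t(1) t(2), of x 0 y0] pmarg0[OF y0] by simp
        qed
        ultimately show ?thesis using True sum1 by simp
      next
        case False
        have "\<forall>y\<in>XS K L. a' \<noteq> [y]" using False unfolding SS_def 0 by auto
        then show ?thesis using False sum1 by simp
      qed
    next
      case (Suc j)
      have s0: "0 < s" unfolding s_def Suc using tg_pos[of "Suc j"] i Suc by auto
      define q3 where "q3 = (\<lambda>z. qf K L \<alpha> t s x z)"
      have q3nn: "0 \<le> q3 z" for z unfolding q3_def using s t by (intro qf_nonneg) auto
      define JI where "JI = (\<lambda>y z. \<integral>\<^sup>+\<tau>'. ennreal (p0 y * (jden L \<alpha>' \<tau>' * qtau K L s z y \<tau>')) * R i z \<tau>' a' \<partial>lebL L)"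
      have T: "ennreal (p0 y * qf K L \<alpha> t 0 x y) * (ennreal (bridge K L \<alpha> s t y x z) * I y z) = ennreal (q3 z) * JI y z"
        if y: "y \<in> XS K L" and z: "z \<in> XS K L" for y z
      proof -
        define q1 where "q1 = qf K L \<alpha> t 0 x y"
        define q2 where "q2 = qf K L \<alpha> s 0 z y"
        have q1: "0 < q1" unfolding q1_def using t by (intro qf_pos) auto
        have q2: "0 < q2" unfolding q2_def using s s0 by (intro qf_pos) auto
        have b: "bridge K L \<alpha> s t y x z = q3 z * q2 / q1"
          unfolding bridge_def q1_def q2_def q3_def using s0 by simp
        have p: "0 \<le> p0 y" using p0nn y by auto
        have e1: "ennreal (p0 y * q1) * ennreal (bridge K L \<alpha> s t y x z) = ennreal (p0 y * q3 z * q2)"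
        proof -
          have "ennreal (p0 y * q1) * ennreal (bridge K L \<alpha> s t y x z) = ennreal (p0 y * q1 * (q3 z * q2 / q1))"
            unfolding b using p q1 q2 q3nn[of z] by (intro emul) auto
          also have "p0 y * q1 * (q3 z * q2 / q1) = p0 y * q3 z * q2" using q1 by (simp add: field_simps)
          finally show ?thesis .
        qed
        have jr: "jres K L \<alpha> \<alpha>' s y z \<tau>' = jden L \<alpha>' \<tau>' * qtau K L s z y \<tau>' / q2" for \<tau>'
          unfolding jres_def q2_def ..
        have "ennreal (p0 y * q1) * (ennreal (bridge K L \<alpha> s t y x z) * I y z) = ennreal (p0 y * q3 z * q2) * I y z"
          using e1 by (simp add: mult.assoc[symmetric])
        also have "\<dots> = (\<integral>\<^sup>+\<tau>'. ennreal (p0 y * q3 z * q2) * (ennreal (jres K L \<alpha> \<alpha>' s y z \<tau>') * R i z \<tau>' a') \<partial>lebL L)"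
          unfolding I' by (rule nn_integral_cmult[symmetric]) measurable
        also have "\<dots> = (\<integral>\<^sup>+\<tau>'. ennreal (q3 z) * (ennreal (p0 y * (jden L \<alpha>' \<tau>' * qtau K L s z y \<tau>')) * R i z \<tau>' a') \<partial>lebL L)"
        proof (intro nn_integral_cong)
          fix \<tau>'
          have jn: "0 \<le> jden L \<alpha>' \<tau>' * qtau K L s z y \<tau>'" by (intro mult_nonneg_nonneg jden_nonneg qtau_nonneg)
          have "ennreal (p0 y * q3 z * q2) * ennreal (jres K L \<alpha> \<alpha>' s y z \<tau>') = ennreal (p0 y * q3 z * q2 * (jden L \<alpha>' \<tau>' * qtau K L s z y \<tau>' / q2))"
            unfolding jr using p q2 q3nn[of z] jn by (intro emul) auto
          also have "p0 y * q3 z * q2 * (jden L \<alpha>' \<tau>' * qtau K L s z y \<tau>' / q2) = q3 z * (p0 y * (jden L \<alpha>' \<tau>' * qtau K L s z y \<tau>'))"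
            using q2 by (simp add: field_simps)
          also have "ennreal \<dots> = ennreal (q3 z) * ennreal (p0 y * (jden L \<alpha>' \<tau>' * qtau K L s z y \<tau>'))"
            using q3nn[of z] p jn by (intro emul[symmetric]) auto
          finally show "ennreal (p0 y * q3 z * q2) * (ennreal (jres K L \<alpha> \<alpha>' s y z \<tau>') * R i z \<tau>' a') =
              ennreal (q3 z) * (ennreal (p0 y * (jden L \<alpha>' \<tau>' * qtau K L s z y \<tau>')) * R i z \<tau>' a')"
            by (metis mult.assoc)
        qed
        also have "\<dots> = ennreal (q3 z) * JI y z"
          unfolding JI_def by (rule nn_integral_cmult) measurable
        finally show ?thesis unfolding q1_def .
      qed
      have SJ: "(\<Sum>y\<in>XS K L. JI y z) = ennreal (if a' \<in> SS K L i \<and> last a' = z then pmarg K L p0 \<alpha> s z * chain i a' else 0)"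
        if z: "z \<in> XS K L" for z
      proof -
        have "(\<Sum>y\<in>XS K L. JI y z) = (\<integral>\<^sup>+\<tau>'. (\<Sum>y\<in>XS K L. ennreal (p0 y * (jden L \<alpha>' \<tau>' * qtau K L s z y \<tau>')) * R i z \<tau>' a') \<partial>lebL L)"
          unfolding JI_def by (rule nn_integral_sum[symmetric]) measurable
        also have "\<dots> = (\<integral>\<^sup>+\<tau>'. ennreal (V s z \<tau>') * R i z \<tau>' a' \<partial>lebL L)"
          unfolding Vsplit sum_distrib_right ..
        also have "\<dots> = ennreal (if a' \<in> SS K L i \<and> last a' = z then pmarg K L p0 \<alpha> s z * chain i a' else 0)"
          unfolding s_def using Suc.IH[OF z] i by simp
        finally show ?thesis .
      qed
      have "(\<Sum>y\<in>XS K L. ennreal (p0 y * qf K L \<alpha> t 0 x y) * C y) = (\<Sum>y\<in>XS K L. \<Sum>z\<in>XS K L. ennreal (q3 z) * JI y z)"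
        unfolding C_def sum_distrib_left by (intro sum.cong refl) (simp add: T)
      also have "\<dots> = (\<Sum>z\<in>XS K L. ennreal (q3 z) * (\<Sum>y\<in>XS K L. JI y z))"
        by (subst sum.swap) (simp add: sum_distrib_left)
      also have "\<dots> = (\<Sum>z\<in>XS K L. ennreal (q3 z) * ennreal (if a' \<in> SS K L i \<and> last a' = z then pmarg K L p0 \<alpha> s z * chain i a' else 0))"
        by (intro sum.cong refl) (simp add: SJ)
      also have "\<dots> = ennreal (if a' \<in> SS K L i then pmarg K L p0 \<alpha> t x * chain (Suc i) a else 0)"
      proof (cases "a' \<in> SS K L i")
        case True
        define z0 where "z0 = last a'"
        have len: "length a' = Suc i" using True unfolding SS_def by simp
        have z0: "z0 \<in> XS K L" using True len unfolding SS_def z0_def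
          by (metis last_in_set list.size(3) mem_Collect_eq nat.distinct(1) subset_iff)
        have "(\<Sum>z\<in>XS K L. ennreal (q3 z) * ennreal (if a' \<in> SS K L i \<and> last a' = z then pmarg K L p0 \<alpha> s z * chain i a' else 0))
            = (\<Sum>z\<in>XS K L. if z = z0 then ennreal (q3 z0) * ennreal (pmarg K L p0 \<alpha> s z0 * chain i a') else 0)"
          using True by (intro sum.cong refl) (auto simp: z0_def)
        also have "\<dots> = ennreal (q3 z0) * ennreal (pmarg K L p0 \<alpha> s z0 * chain i a')"
          using z0 finXS by (simp add: sum.delta')
        also have "\<dots> = ennreal (q3 z0 * (pmarg K L p0 \<alpha> s z0 * chain i a'))"
          using q3nn[of z0] by (simp add: ennreal_mult')
        also have "q3 z0 * (pmarg K L p0 \<alpha> s z0 * chain i a') = pmarg K L p0 \<alpha> t x * chain (Suc i) a"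
        proof -
          have "chain (Suc i) a = chain i a' * prev K L p0 \<alpha> s t z0 x"
            unfolding a chain_snoc[OF len] z0_def s_def t_def ..
          then show ?thesis using prev_eq[OF t(1) t(2), of x s z0] unfolding q3_def
            by (simp add: algebra_simps)
        qed
        finally show ?thesis using True by simp
      next
        case False
        then show ?thesis by simp
      qed
      finally show "(\<Sum>y\<in>XS K L. ennreal (p0 y * qf K L \<alpha> t 0 x y) * C y) =
        ennreal (if a' \<in> SS K L i then pmarg K L p0 \<alpha> t x * chain (Suc i) a else 0)" .
    qed
  qed
qed

end


context udm begin

lemma jcond_V: "jcond K L p0 \<alpha> \<alpha>' t x \<tau> = V t x \<tau> / pmarg K L p0 \<alpha> t x"
  unfolding jcond_def V_def ..

lemma Vnn: "0 \<le> V t x \<tau>" unfolding V_def using p0nn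
  by (auto intro!: mult_nonneg_nonneg sum_nonneg jden_nonneg qtau_nonneg)

lemma main: "proc K L p0 \<alpha> \<alpha>' tg n = revlaw K L p0 \<alpha> tg n"
proof -
  have XSne: "XS K L \<noteq> {}" unfolding XS_def using K2 by (simp add: PiE_eq_empty_iff)
  have t1: "(1::real) \<in> {0..1}" "(0::real) < 1" by auto
  define D1 where "D1 = density (count_space (XS K L)) (\<lambda>x. ennreal (pmarg K L p0 \<alpha> (tg n) x))"
  define D2 where "D2 = (\<lambda>x. density (lebL L) (\<lambda>\<tau>. ennreal (jcond K L p0 \<alpha> \<alpha>' (tg n) x \<tau>)))"
  have ne2: "space (D2 x) \<noteq> {}" for x unfolding D2_def using space_lebL_ne by simp
  have sub2: "subprob_space (D2 x)" for x
  proof (rule subprob_spaceI)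
    have pp: "0 < pmarg K L p0 \<alpha> 1 x" using pmarg_pos[OF t1] .
    have "emeasure (D2 x) (space (D2 x)) = (\<integral>\<^sup>+\<tau>. ennreal (jcond K L p0 \<alpha> \<alpha>' 1 x \<tau>) * indicator (space (lebL L)) \<tau> \<partial>lebL L)"
      unfolding D2_def tgn by (subst emeasure_density) (auto simp: jcond_V)
    also have "\<dots> = (\<integral>\<^sup>+\<tau>. ennreal (V 1 x \<tau>) * ennreal (1 / pmarg K L p0 \<alpha> 1 x) \<partial>lebL L)"
      unfolding jcond_V using pp by (intro nn_integral_cong) (auto simp: emul Vnn)
    also have "\<dots> = ennreal (pmarg K L p0 \<alpha> 1 x) * ennreal (1 / pmarg K L p0 \<alpha> 1 x)"
      by (subst nn_integral_multc) (auto simp: V_int[OF t1(1)])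
    also have "\<dots> = 1" using pp by (subst emul) auto
    finally show "emeasure (D2 x) (space (D2 x)) \<le> 1" by simp
  qed (use ne2 in auto)
  have N2: "\<And>\<tau>. \<tau> \<in> space (D2 x) \<Longrightarrow> run K L p0 \<alpha> \<alpha>' tg n x \<tau> = density (count_space UNIV) (R n x \<tau>)"
    and sp2: "\<And>\<tau>. \<tau> \<in> space (D2 x) \<Longrightarrow> subprob_space (run K L p0 \<alpha> \<alpha>' tg n x \<tau>)"
    if x: "x \<in> XS K L" for x using run_dens[OF x le_refl] by blast+
  have su2: "\<And>\<tau> a. \<tau> \<in> space (D2 x) \<Longrightarrow> a \<notin> SS K L n \<Longrightarrow> R n x \<tau> a = 0"
    if x: "x \<in> XS K L" for x using R_supp[OF x] by auto
  have me2: "\<And>a. (\<lambda>\<tau>. R n x \<tau> a) \<in> borel_measurable (D2 x)" for x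
    unfolding D2_def measurable_density_eq1 by measurable
  define F where "F = (\<lambda>x a. \<integral>\<^sup>+\<tau>. R n x \<tau> a \<partial>D2 x)"
  have step2: "bind (D2 x) (\<lambda>\<tau>. run K L p0 \<alpha> \<alpha>' tg n x \<tau>) = density (count_space UNIV) (F x)"
    and ssub2: "subprob_space (bind (D2 x) (\<lambda>\<tau>. run K L p0 \<alpha> \<alpha>' tg n x \<tau>))"
    if x: "x \<in> XS K L" for x
    unfolding F_def
    using bind_dens[OF ne2 finSS N2[OF x] su2[OF x] me2 sp2[OF x]]
       bind_dens_subprob[OF finSS N2[OF x] su2[OF x] me2 sp2[OF x] sub2] by auto
  have Fsupp: "F x a = 0" if "x \<in> XS K L" "a \<notin> SS K L n" for x a
  proof -
    have "F x a = (\<integral>\<^sup>+\<tau>. 0 \<partial>D2 x)" unfolding F_def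
      by (intro nn_integral_cong) (simp add: R_supp[OF that])
    then show ?thesis by simp
  qed
  have ne1: "space D1 \<noteq> {}" unfolding D1_def using XSne by simp
  have N1: "\<And>x. x \<in> space D1 \<Longrightarrow> bind (D2 x) (\<lambda>\<tau>. run K L p0 \<alpha> \<alpha>' tg n x \<tau>) = density (count_space UNIV) (F x)"
    unfolding D1_def using step2 by simp
  have sp1: "\<And>x. x \<in> space D1 \<Longrightarrow> subprob_space (bind (D2 x) (\<lambda>\<tau>. run K L p0 \<alpha> \<alpha>' tg n x \<tau>))"
    unfolding D1_def using ssub2 by simp
  have su1: "\<And>x a. x \<in> space D1 \<Longrightarrow> a \<notin> SS K L n \<Longrightarrow> F x a = 0"
    unfolding D1_def using Fsupp by simp
  have me1: "\<And>a. (\<lambda>x. F x a) \<in> borel_measurable D1"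
    unfolding D1_def measurable_density_eq1 by simp
  have P: "proc K L p0 \<alpha> \<alpha>' tg n = density (count_space UNIV) (\<lambda>a. \<integral>\<^sup>+x. F x a \<partial>D1)"
  proof -
    have "proc K L p0 \<alpha> \<alpha>' tg n = bind D1 (\<lambda>x. bind (D2 x) (\<lambda>\<tau>. run K L p0 \<alpha> \<alpha>' tg n x \<tau>))"
      unfolding proc_def D1_def D2_def by simp
    also have "\<dots> = density (count_space UNIV) (\<lambda>a. \<integral>\<^sup>+x. F x a \<partial>D1)"
      by (rule bind_dens[OF ne1 finSS N1 su1 me1 sp1])
    finally show ?thesis .
  qed
  have pt: "(\<integral>\<^sup>+x. F x a \<partial>D1) =
      (if length a = Suc n \<and> set a \<subseteq> XS K L
       then ennreal (pmarg K L p0 \<alpha> (tg n) (a ! n) *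
            (\<Prod>i\<in>{1..n}. prev K L p0 \<alpha> (tg (i - 1)) (tg i) (a ! (i - 1)) (a ! i)))
       else 0)" for a
  proof -
    have Fx: "ennreal (pmarg K L p0 \<alpha> 1 x) * F x a =
        ennreal (if a \<in> SS K L n \<and> last a = x then pmarg K L p0 \<alpha> 1 x * chain n a else 0)" if x: "x \<in> XS K L" for x
    proof -
      have pp: "0 < pmarg K L p0 \<alpha> 1 x" using pmarg_pos[OF t1] .
      have "F x a = (\<integral>\<^sup>+\<tau>. ennreal (jcond K L p0 \<alpha> \<alpha>' 1 x \<tau>) * R n x \<tau> a \<partial>lebL L)"
        unfolding F_def D2_def tgn by (subst nn_integral_density) (auto simp: jcond_V)
      then have "ennreal (pmarg K L p0 \<alpha> 1 x) * F x a =
          (\<integral>\<^sup>+\<tau>. ennreal (pmarg K L p0 \<alpha> 1 x) * (ennreal (jcond K L p0 \<alpha> \<alpha>' 1 x \<tau>) * R n x \<tau> a) \<partial>lebL L)"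
        by (simp add: nn_integral_cmult jcond_V)
      also have "\<dots> = (\<integral>\<^sup>+\<tau>. ennreal (V 1 x \<tau>) * R n x \<tau> a \<partial>lebL L)"
      proof (intro nn_integral_cong)
        fix \<tau>
        have "ennreal (pmarg K L p0 \<alpha> 1 x) * ennreal (jcond K L p0 \<alpha> \<alpha>' 1 x \<tau>) = ennreal (V 1 x \<tau>)"
          unfolding jcond_V using pp Vnn[of 1 x \<tau>] by (subst emul) auto
        then show "ennreal (pmarg K L p0 \<alpha> 1 x) * (ennreal (jcond K L p0 \<alpha> \<alpha>' 1 x \<tau>) * R n x \<tau> a) =
            ennreal (V 1 x \<tau>) * R n x \<tau> a" by (metis mult.assoc)
      qed
      also have "\<dots> = ennreal (if a \<in> SS K L n \<and> last a = x then pmarg K L p0 \<alpha> 1 x * chain n a else 0)"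
        using keyid[OF x, of n a] tgn by simp
      finally show ?thesis .
    qed
    have "(\<integral>\<^sup>+x. F x a \<partial>D1) = (\<Sum>x\<in>XS K L. ennreal (pmarg K L p0 \<alpha> 1 x) * F x a)"
      unfolding D1_def tgn by (rule nn_int_dcount[OF finXS])
    also have "\<dots> = (\<Sum>x\<in>XS K L. ennreal (if a \<in> SS K L n \<and> last a = x then pmarg K L p0 \<alpha> 1 x * chain n a else 0))"
      by (intro sum.cong refl) (simp add: Fx)
    also have "\<dots> = (if length a = Suc n \<and> set a \<subseteq> XS K L
       then ennreal (pmarg K L p0 \<alpha> (tg n) (a ! n) *
            (\<Prod>i\<in>{1..n}. prev K L p0 \<alpha> (tg (i - 1)) (tg i) (a ! (i - 1)) (a ! i)))
       else 0)"
    proof (cases "a \<in> SS K L n")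
      case True
      then have len: "length a = Suc n" and sub: "set a \<subseteq> XS K L" unfolding SS_def by auto
      have ne: "a \<noteq> []" using len by auto
      have la: "last a = a ! n" using len ne by (simp add: last_conv_nth)
      have lx: "last a \<in> XS K L" using sub ne by auto
      have "(\<Sum>x\<in>XS K L. ennreal (if a \<in> SS K L n \<and> last a = x then pmarg K L p0 \<alpha> 1 x * chain n a else 0))
          = (\<Sum>x\<in>XS K L. if x = last a then ennreal (pmarg K L p0 \<alpha> 1 (last a) * chain n a) else 0)"
        using True by (intro sum.cong refl) auto
      also have "\<dots> = ennreal (pmarg K L p0 \<alpha> 1 (last a) * chain n a)"
        using lx finXS by (simp add: sum.delta')
      finally show ?thesis using len sub unfolding la tgn chain_def by simp
    next
      case False
      have c: "\<not> (length a = Suc n \<and> set a \<subseteq> XS K L)" using False unfolding SS_def by auto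
      show ?thesis using False c by auto
    qed
    finally show ?thesis .
  qed
  show ?thesis unfolding P revlaw_def using pt by simp
qed

end

theorem mainTheorem10:
  fixes K L n :: nat and p0 :: "(nat \<Rightarrow> nat) \<Rightarrow> real"
    and \<alpha> \<alpha>' :: "real \<Rightarrow> real" and tg :: "nat \<Rightarrow> real"
  assumes "K \<ge> 2" and "L \<ge> 1"
    and "\<forall>x\<in>XS K L. p0 x \<ge> 0" and "(\<Sum>x\<in>XS K L. p0 x) = 1"
    and "\<forall>s\<in>{0..1}. (\<alpha> has_real_derivative \<alpha>' s) (at s within {0..1})"
    and "continuous_on {0..1} \<alpha>'"
    and "\<forall>s\<in>{0..1}. \<forall>t\<in>{0..1}. s < t \<longrightarrow> \<alpha> t < \<alpha> s"
    and "\<alpha> 0 = 1" and "\<alpha> 1 = 0"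
    and "n \<ge> 1" and "tg 0 = 0" and "tg n = 1" and "\<forall>i<n. tg i < tg (Suc i)"
  shows "proc K L p0 \<alpha> \<alpha>' tg n = revlaw K L p0 \<alpha> tg n"
proof -
  interpret udm K L n p0 \<alpha> \<alpha>' tg using assms by unfold_locales auto
  show ?thesis by (rule main)
qed


end
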